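(* Let $(M,g)$ be an $n$-dimensional Lorentzian manifold with Levi-Civita connection $\nabla$, let $u$ be a unit timelike vector field ($u_pu^p=-1$), and let $A,B$ be smooth scalar fields with $B\neq 0$. The perfect fluid tensor $K_{jk}=Ag_{jk}+Bu_ju_k$ is a conformal Killing tensor if and only if (1) the velocity $u$ is shear-free ($\sigma_{ij}=0$), and (2) $H=\dfrac{\dot B}{2B}$ and $\nabla_jB=-\dot B\,u_j+2B\,\dot u_j$. In that case the conformal vector of $K$ is $\eta_j=\nabla_jA+\dot B\,u_j$, and the scalar field $A$ is unconstrained.
   Context: A symmetric tensor $K_{ij}$ on an $n$-dimensional pseudo-Riemannian manifold is a conformal Killing tensor (CKT) if $\nabla_iK_{jl}+\nabla_jK_{li}+\nabla_lK_{ij}=\eta_ig_{jl}+\eta_jg_{li}+\eta_lg_{ij}$ for some covector $\eta_i$; necessarily $\eta_i=\frac{\nabla_iK+2\nabla_jK^j{}_i}{n+2}$ with $K=g^{ij}K_{ij}$, and $\eta_i$ is called the conformal vector. For a scalar $f$, $\dot f=u^k\nabla_kf$; the acceleration is $\dot u_j=u^k\nabla_ku_j$. Every unit timelike vector field has the canonical decomposition $\nabla_iu_j=H(g_{ij}+u_iu_j)-u_i\dot u_j+\omega_{ij}+\sigma_{ij}$, where $H=\frac{1}{n-1}\nabla_ru^r$ is the expansion, $\omega_{ij}=-\omega_{ji}$ the vorticity, $\sigma_{ij}=\sigma_{ji}$ the shear, with $g^{ij}\sigma_{ij}=0$ and $\omega_{ij}u^j=\sigma_{ij}u^j=0$. 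*)

theory Defs
  imports "HOL-Analysis.Analysis"
begin

text \<open>Local coordinate formalization on an open set U of real^'n (index type 'n, n = CARD('n)).
Fields: metric g (lower components g x $ i $ j), vector field u (upper components u x $ i),
covector fields as functions real^'n => 'n => real, (0,2)-tensors as real^'n => 'n => 'n => real.\<close>

definition partial :: "'n::finite \<Rightarrow> (real^'n \<Rightarrow> real) \<Rightarrow> real^'n \<Rightarrow> real" where
  "partial i f x = frechet_derivative f (at x) (axis i 1)"

fun pd :: "'n::finite list \<Rightarrow> (real^'n \<Rightarrow> real) \<Rightarrow> real^'n \<Rightarrow> real" where
  "pd [] f = f"
| "pd (i # is) f = (\<lambda>x. partial i (pd is f) x)"

definition smooth_on :: "(real^'n::finite) set \<Rightarrow> (real^'n \<Rightarrow> real) \<Rightarrow> bool" where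
  "smooth_on U f \<longleftrightarrow> (\<forall>is. \<forall>x\<in>U. pd is f differentiable (at x))"

definition lorentzian_on :: "(real^'n::finite) set \<Rightarrow> (real^'n \<Rightarrow> real^'n^'n) \<Rightarrow> bool" where
  "lorentzian_on U g \<longleftrightarrow> (\<forall>x\<in>U. transpose (g x) = g x \<and>
     (\<exists>(P::real^'n^'n) i0. invertible P \<and>
        transpose P ** g x ** P = (\<chi> i j. if i = j then (if i = i0 then -1 else 1) else 0)))"

definition ginv :: "(real^'n::finite \<Rightarrow> real^'n^'n) \<Rightarrow> real^'n \<Rightarrow> real^'n^'n" where
  "ginv g x = matrix_inv (g x)"

text \<open>Christoffel symbols of the Levi-Civita connection: christoffel g x k i j = Gamma^k_{ij}.\<close>
definition christoffel :: "(real^'n::finite \<Rightarrow> real^'n^'n) \<Rightarrow> real^'n \<Rightarrow> 'n \<Rightarrow> 'n \<Rightarrow> 'n \<Rightarrow> real" where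
  "christoffel g x k i j = (1/2) * (\<Sum>l\<in>UNIV. ginv g x $ k $ l *
      (partial i (\<lambda>y. g y $ l $ j) x + partial j (\<lambda>y. g y $ l $ i) x - partial l (\<lambda>y. g y $ i $ j) x))"

definition cov_d1 :: "(real^'n::finite \<Rightarrow> real^'n^'n) \<Rightarrow> (real^'n \<Rightarrow> 'n \<Rightarrow> real) \<Rightarrow> real^'n \<Rightarrow> 'n \<Rightarrow> 'n \<Rightarrow> real" where
  "cov_d1 g w x i j = partial i (\<lambda>y. w y j) x - (\<Sum>k\<in>UNIV. christoffel g x k i j * w x k)"

definition cov_d2 :: "(real^'n::finite \<Rightarrow> real^'n^'n) \<Rightarrow> (real^'n \<Rightarrow> 'n \<Rightarrow> 'n \<Rightarrow> real) \<Rightarrow> real^'n \<Rightarrow> 'n \<Rightarrow> 'n \<Rightarrow> 'n \<Rightarrow> real" where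
  "cov_d2 g T x i j l = partial i (\<lambda>y. T y j l) x
      - (\<Sum>k\<in>UNIV. christoffel g x k i j * T x k l)
      - (\<Sum>k\<in>UNIV. christoffel g x k i l * T x j k)"

definition lower :: "(real^'n::finite \<Rightarrow> real^'n^'n) \<Rightarrow> (real^'n \<Rightarrow> real^'n) \<Rightarrow> real^'n \<Rightarrow> 'n \<Rightarrow> real" where
  "lower g u x j = (\<Sum>k\<in>UNIV. g x $ j $ k * u x $ k)"

definition accel :: "(real^'n::finite \<Rightarrow> real^'n^'n) \<Rightarrow> (real^'n \<Rightarrow> real^'n) \<Rightarrow> real^'n \<Rightarrow> 'n \<Rightarrow> real" where
  "accel g u x j = (\<Sum>k\<in>UNIV. u x $ k * cov_d1 g (lower g u) x k j)"

definition dotd :: "(real^'n::finite \<Rightarrow> real^'n) \<Rightarrow> (real^'n \<Rightarrow> real) \<Rightarrow> real^'n \<Rightarrow> real" where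
  "dotd u f x = (\<Sum>k\<in>UNIV. u x $ k * partial k f x)"

text \<open>Expansion H = (1/(n-1)) nabla_r u^r.\<close>
definition expansion :: "(real^'n::finite \<Rightarrow> real^'n^'n) \<Rightarrow> (real^'n \<Rightarrow> real^'n) \<Rightarrow> real^'n \<Rightarrow> real" where
  "expansion g u x = (1 / (real CARD('n) - 1)) *
     ((\<Sum>r\<in>UNIV. partial r (\<lambda>y. u y $ r) x) + (\<Sum>r\<in>UNIV. \<Sum>k\<in>UNIV. christoffel g x r r k * u x $ k))"

text \<open>Shear: the symmetric trace-free part sigma_{ij} in the canonical decomposition
  nabla_i u_j = H h_{ij} - u_i a_j + omega_{ij} + sigma_{ij}, i.e.
  sigma_{ij} = nabla_(i u_j) + u_(i a_j) - H (g_{ij} + u_i u_j).\<close>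
definition shear :: "(real^'n::finite \<Rightarrow> real^'n^'n) \<Rightarrow> (real^'n \<Rightarrow> real^'n) \<Rightarrow> real^'n \<Rightarrow> 'n \<Rightarrow> 'n \<Rightarrow> real" where
  "shear g u x i j =
     (cov_d1 g (lower g u) x i j + cov_d1 g (lower g u) x j i) / 2
     + (lower g u x i * accel g u x j + lower g u x j * accel g u x i) / 2
     - expansion g u x * (g x $ i $ j + lower g u x i * lower g u x j)"

definition ckt_eq :: "(real^'n::finite) set \<Rightarrow> (real^'n \<Rightarrow> real^'n^'n) \<Rightarrow> (real^'n \<Rightarrow> 'n \<Rightarrow> 'n \<Rightarrow> real) \<Rightarrow> (real^'n \<Rightarrow> 'n \<Rightarrow> real) \<Rightarrow> bool" where
  "ckt_eq U g K eta \<longleftrightarrow> (\<forall>x\<in>U. \<forall>i j l.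
     cov_d2 g K x i j l + cov_d2 g K x j l i + cov_d2 g K x l i j
       = eta x i * g x $ j $ l + eta x j * g x $ l $ i + eta x l * g x $ i $ j)"

definition is_CKT :: "(real^'n::finite) set \<Rightarrow> (real^'n \<Rightarrow> real^'n^'n) \<Rightarrow> (real^'n \<Rightarrow> 'n \<Rightarrow> 'n \<Rightarrow> real) \<Rightarrow> bool" where
  "is_CKT U g K \<longleftrightarrow> (\<exists>eta. ckt_eq U g K eta)"

definition perfect_fluid :: "(real^'n::finite \<Rightarrow> real^'n^'n) \<Rightarrow> (real^'n \<Rightarrow> real^'n) \<Rightarrow> (real^'n \<Rightarrow> real) \<Rightarrow> (real^'n \<Rightarrow> real) \<Rightarrow> real^'n \<Rightarrow> 'n \<Rightarrow> 'n \<Rightarrow> real" where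
  "perfect_fluid g u A B x j k = A x * g x $ j $ k + B x * lower g u x j * lower g u x k"

end

theory Submission
  imports Defs
begin


lemma delta_mult1[simp]: "(if P then 1 else 0) * (x::real) = (if P then x else 0)" by simp
lemma delta_mult2[simp]: "(x::real) * (if P then 1 else 0) = (if P then x else 0)" by simp

lemma partial_has:
  assumes "(f has_derivative f') (at x)"
  shows "partial i f x = f' (axis i 1)"
  using frechet_derivative_at[OF assms] unfolding partial_def by simp

lemma partial_mult:
  assumes "f differentiable (at x)" "h differentiable (at x)"
  shows "partial i (\<lambda>y. f y * h y) x = partial i f x * h x + f x * partial i h x"
proof -
  from assms obtain f' h' where F: "(f has_derivative f') (at x)" and H: "(h has_derivative h') (at x)"
    by (auto simp: differentiable_def)
  have "((\<lambda>y. f y * h y) has_derivative (\<lambda>v. f x * h' v + f' v * h x)) (at x)"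
    using has_derivative_mult[OF F H] .
  from partial_has[OF this] show ?thesis using partial_has[OF F] partial_has[OF H] by (simp add: mult.commute)
qed

lemma partial_add:
  assumes "f differentiable (at x)" "h differentiable (at x)"
  shows "partial i (\<lambda>y. f y + h y) x = partial i f x + partial i h x"
proof -
  from assms obtain f' h' where F: "(f has_derivative f') (at x)" and H: "(h has_derivative h') (at x)"
    by (auto simp: differentiable_def)
  have "((\<lambda>y. f y + h y) has_derivative (\<lambda>v. f' v + h' v)) (at x)"
    using has_derivative_add[OF F H] .
  from partial_has[OF this] show ?thesis using partial_has[OF F] partial_has[OF H] by simp
qed

lemma partial_sum:
  fixes f :: "'k::finite \<Rightarrow> real^'n::finite \<Rightarrow> real"
  assumes "\<And>k. f k differentiable (at x)"
  shows "partial i (\<lambda>y. \<Sum>k\<in>UNIV. f k y) x = (\<Sum>k\<in>UNIV. partial i (f k) x)"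
proof -
  have F: "\<And>k. (f k has_derivative frechet_derivative (f k) (at x)) (at x)"
    using assms frechet_derivative_works by blast
  have "((\<lambda>y. \<Sum>k\<in>UNIV. f k y) has_derivative (\<lambda>v. \<Sum>k\<in>UNIV. frechet_derivative (f k) (at x) v)) (at x)"
    by (rule has_derivative_sum) (use F in auto)
  from partial_has[OF this] show ?thesis unfolding partial_def by simp
qed

lemma partial_const:
  assumes "open U" "x \<in> U" "\<And>y. y \<in> U \<Longrightarrow> f y = c"
  shows "partial i f x = 0"
proof -
  have "((\<lambda>y. c) has_derivative (\<lambda>h. 0)) (at x)" by simp
  then have "(f has_derivative (\<lambda>h. 0)) (at x)"
    by (rule has_derivative_transform_within_open[OF _ assms(1,2)]) (use assms(3) in auto)
  from partial_has[OF this] show ?thesis by simp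
qed

lemma partial_cong:
  assumes "f differentiable (at x)" "open U" "x \<in> U" "\<And>y. y \<in> U \<Longrightarrow> f y = h y"
  shows "partial i f x = partial i h x"
  unfolding partial_def using frechet_derivative_transform_within_open[OF assms] by simp

lemma smooth_diff: "smooth_on U f \<Longrightarrow> x \<in> U \<Longrightarrow> f differentiable (at x)"
  unfolding smooth_on_def by (metis pd.simps(1))

lemma matrix_inv_props:
  fixes A :: "real^'n::finite^'n"
  assumes "invertible A"
  shows "A ** matrix_inv A = mat 1" "matrix_inv A ** A = mat 1"
proof -
  have "\<exists>A'. A ** A' = mat 1 \<and> A' ** A = mat 1" using assms unfolding invertible_def by blast
  then have "A ** matrix_inv A = mat 1 \<and> matrix_inv A ** A = mat 1"
    unfolding matrix_inv_def by (rule someI_ex)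
  then show "A ** matrix_inv A = mat 1" "matrix_inv A ** A = mat 1" by auto
qed

lemma lor_facts:
  fixes g :: "real^'n::finite \<Rightarrow> real^'n^'n"
  assumes lor: "lorentzian_on U g" and x: "x \<in> U"
  shows "\<And>i j. g x $ i $ j = g x $ j $ i" "invertible (g x)"
proof -
  obtain P i0 where tr: "transpose (g x) = g x" and P: "invertible (P::real^'n^'n)"
     and D: "transpose P ** g x ** P = (\<chi> i j. if i = j then (if i = i0 then -1 else 1) else 0)"
    using lor x unfolding lorentzian_on_def by blast
  show "\<And>i j. g x $ i $ j = g x $ j $ i"
  proof -
    fix i j
    have "g x $ i $ j = transpose (g x) $ i $ j" using tr by simp
    then show "g x $ i $ j = g x $ j $ i" by (simp add: transpose_def)
  qed
  let ?D = "(\<chi> i j. if i = j then (if i = i0 then -1 else 1) else 0) :: real^'n^'n"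
  have "det ?D = (\<Prod>i\<in>UNIV. ?D $ i $ i)" by (rule det_diagonal) simp
  also have "\<dots> \<noteq> 0" by (simp add: prod_zero_iff)
  finally have dD: "det ?D \<noteq> 0" .
  have "det ?D = det (transpose P) * det (g x) * det P" unfolding D[symmetric] by (simp add: det_mul)
  then have "det (g x) \<noteq> 0" using dD by auto
  then show "invertible (g x)" by (simp add: invertible_det_nz)
qed

lemma ginv_facts:
  fixes g :: "real^'n::finite \<Rightarrow> real^'n^'n"
  assumes lor: "lorentzian_on U g" and x: "x \<in> U"
  shows "\<And>i j. (\<Sum>k\<in>UNIV. g x $ i $ k * ginv g x $ k $ j) = (if i = j then 1 else 0)"
    "\<And>i j. (\<Sum>k\<in>UNIV. ginv g x $ i $ k * g x $ k $ j) = (if i = j then 1 else 0)"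
    "\<And>i j. ginv g x $ i $ j = ginv g x $ j $ i"
proof -
  note L = lor_facts[OF lor x]
  have R: "g x ** ginv g x = mat 1" and Lf: "ginv g x ** g x = mat 1"
    using matrix_inv_props[OF L(2)] unfolding ginv_def by auto
  show "\<And>i j. (\<Sum>k\<in>UNIV. g x $ i $ k * ginv g x $ k $ j) = (if i = j then 1 else 0)"
  proof -
    fix i j show "(\<Sum>k\<in>UNIV. g x $ i $ k * ginv g x $ k $ j) = (if i = j then 1 else 0)"
      using arg_cong[OF R, of "\<lambda>M. M $ i $ j"] by (simp add: matrix_matrix_mult_def mat_def)
  qed
  show "\<And>i j. (\<Sum>k\<in>UNIV. ginv g x $ i $ k * g x $ k $ j) = (if i = j then 1 else 0)"
  proof -
    fix i j show "(\<Sum>k\<in>UNIV. ginv g x $ i $ k * g x $ k $ j) = (if i = j then 1 else 0)"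
      using arg_cong[OF Lf, of "\<lambda>M. M $ i $ j"] by (simp add: matrix_matrix_mult_def mat_def)
  qed
  have tg: "transpose (g x) = g x" by (simp add: vec_eq_iff transpose_def L(1))
  have "transpose (ginv g x) = transpose (ginv g x) ** (g x ** ginv g x)" by (simp add: R)
  also have "\<dots> = (transpose (ginv g x) ** transpose (g x)) ** ginv g x" by (simp add: tg matrix_mul_assoc)
  also have "\<dots> = ginv g x" by (simp add: matrix_transpose_mul[symmetric] R)
  finally have T: "transpose (ginv g x) = ginv g x" .
  show "\<And>i j. ginv g x $ i $ j = ginv g x $ j $ i"
  proof -
    fix i j
    have "ginv g x $ i $ j = transpose (ginv g x) $ i $ j" using T by simp
    then show "ginv g x $ i $ j = ginv g x $ j $ i" by (simp add: transpose_def)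
  qed
qed





lemma alg_nec:
  fixes G Gi P KT :: "'n::finite \<Rightarrow> 'n \<Rightarrow> _" and U L al b eta a :: "'n \<Rightarrow> real" and B Bd trP :: real
  assumes Gs: "\<And>i j. G i j = G j i" and Gis: "\<And>i j. Gi i j = Gi j i"
  and GGi: "\<And>i j. (\<Sum>k\<in>UNIV. G i k * Gi k j) = (if i = j then 1 else (0::real))"
  and GiG: "\<And>i j. (\<Sum>k\<in>UNIV. Gi i k * G k j) = (if i = j then 1 else 0)"
  and Ldef: "\<And>j. L j = (\<Sum>k\<in>UNIV. G j k * U k)"
  and unit: "(\<Sum>j\<in>UNIV. L j * U j) = -1"
  and PU: "\<And>i. (\<Sum>j\<in>UNIV. U j * P i j) = 0"
  and adef: "\<And>j. a j = (\<Sum>k\<in>UNIV. U k * P k j)"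
  and Bd: "Bd = (\<Sum>k\<in>UNIV. U k * b k)"
  and trP: "trP = (\<Sum>i\<in>UNIV. \<Sum>j\<in>UNIV. Gi i j * P i j)"
  and KT: "\<And>i j l. KT i j l = al i * G j l + b i * L j * L l + B * (P i j * L l + L j * P i l)"
  and E: "\<And>i j l. KT i j l + KT j l i + KT l i j = eta i * G j l + eta j * G l i + eta l * G i j"
  and Bnz: "B \<noteq> 0" and n2: "CARD('n) \<ge> 2"
  shows "(\<forall>i. eta i = al i + Bd * L i) \<and> trP = (real CARD('n) - 1) * Bd / (2 * B)
       \<and> (\<forall>j. b j = - Bd * L j + 2 * B * a j)"
proof -
  let ?S = "\<lambda>f::'n\<Rightarrow>real. \<Sum>k\<in>UNIV. f k"
  have UL: "(\<Sum>j\<in>UNIV. U j * L j) = -1" using unit by (simp add: mult.commute)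
  have UUG: "(\<Sum>j\<in>UNIV. \<Sum>l\<in>UNIV. U j * U l * G j l) = -1"
    using UL by (simp add: Ldef sum_distrib_left mult_ac)
  have UG: "\<And>l. (\<Sum>j\<in>UNIV. U j * G j l) = L l"
    by (simp add: Ldef Gs mult_ac)
  have Ua: "(\<Sum>i\<in>UNIV. U i * a i) = 0"
  proof -
    have "(\<Sum>i\<in>UNIV. U i * a i) = (\<Sum>i\<in>UNIV. \<Sum>k\<in>UNIV. U i * (U k * P k i))"
      by (simp add: adef sum_distrib_left)
    also have "\<dots> = (\<Sum>k\<in>UNIV. \<Sum>i\<in>UNIV. U i * (U k * P k i))" by (rule sum.swap)
    also have "\<dots> = (\<Sum>k\<in>UNIV. U k * (\<Sum>i\<in>UNIV. U i * P k i))" by (simp add: sum_distrib_left mult_ac)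
    also have "\<dots> = 0" by (simp add: PU)
    finally show ?thesis .
  qed
  have T1: "\<And>i. (\<Sum>j\<in>UNIV. \<Sum>l\<in>UNIV. U j * U l * KT i j l) = al i * (\<Sum>j\<in>UNIV. \<Sum>l\<in>UNIV. U j * U l * G j l)
      + b i * (\<Sum>j\<in>UNIV. U j * L j) * (\<Sum>j\<in>UNIV. U j * L j)
      + B * (\<Sum>j\<in>UNIV. U j * P i j) * (\<Sum>j\<in>UNIV. U j * L j) +  B * (\<Sum>j\<in>UNIV. U j * L j) * (\<Sum>j\<in>UNIV. U j * P i j)"
    by (simp add: KT algebra_simps sum.distrib sum_distrib_left sum_product)
  define Ual where "Ual = (\<Sum>j\<in>UNIV. U j * al j)"
  define Ueta where "Ueta = (\<Sum>j\<in>UNIV. U j * eta j)"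
  have UG2: "\<And>i. (\<Sum>j\<in>UNIV. U j * G i j) = L i" by (simp add: Ldef mult_ac)
  have UPa: "\<And>i. (\<Sum>l\<in>UNIV. U l * P l i) = a i" by (simp add: adef)
  have a11: "\<And>i. (\<Sum>j\<in>(UNIV::'n set). (\<Sum>l\<in>(UNIV::'n set). U j * U l * (al i * G j l))) = - al i"
  proof -
    fix i
    have inner: "\<And>j. (\<Sum>l\<in>(UNIV::'n set). U j * U l * (al i * G j l)) = al i * (U j * L j)"
    proof -
      fix j
      show "(\<Sum>l\<in>(UNIV::'n set). U j * U l * (al i * G j l)) = al i * (U j * L j)" by (simp add: Ldef sum_distrib_left mult_ac)
    qed
    have "(\<Sum>j\<in>(UNIV::'n set). (\<Sum>l\<in>(UNIV::'n set). U j * U l * (al i * G j l))) = (\<Sum>j\<in>(UNIV::'n set). al i * (U j * L j))" by (simp only: inner)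
    also have "\<dots> = al i * (\<Sum>j\<in>(UNIV::'n set). U j * L j)" by (simp add: sum_distrib_left mult_ac)
    also have "\<dots> = - al i" by (simp add: UL)
    finally show "(\<Sum>j\<in>(UNIV::'n set). (\<Sum>l\<in>(UNIV::'n set). U j * U l * (al i * G j l))) = - al i" .
  qed
  have r1: "\<And>i. (\<Sum>j\<in>(UNIV::'n set). (\<Sum>l\<in>(UNIV::'n set). U j * U l * (eta i * G j l))) = - eta i"
  proof -
    fix i
    have inner: "\<And>j. (\<Sum>l\<in>(UNIV::'n set). U j * U l * (eta i * G j l)) = eta i * (U j * L j)"
    proof -
      fix j
      show "(\<Sum>l\<in>(UNIV::'n set). U j * U l * (eta i * G j l)) = eta i * (U j * L j)" by (simp add: Ldef sum_distrib_left mult_ac)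
    qed
    have "(\<Sum>j\<in>(UNIV::'n set). (\<Sum>l\<in>(UNIV::'n set). U j * U l * (eta i * G j l))) = (\<Sum>j\<in>(UNIV::'n set). eta i * (U j * L j))" by (simp only: inner)
    also have "\<dots> = eta i * (\<Sum>j\<in>(UNIV::'n set). U j * L j)" by (simp add: sum_distrib_left mult_ac)
    also have "\<dots> = - eta i" by (simp add: UL)
    finally show "(\<Sum>j\<in>(UNIV::'n set). (\<Sum>l\<in>(UNIV::'n set). U j * U l * (eta i * G j l))) = - eta i" .
  qed
  have a12: "\<And>i. (\<Sum>j\<in>(UNIV::'n set). (\<Sum>l\<in>(UNIV::'n set). U j * U l * (b i * L j * L l))) = b i"
  proof -
    fix i
    have inner: "\<And>j. (\<Sum>l\<in>(UNIV::'n set). U j * U l * (b i * L j * L l)) = - (b i * U j * L j)"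
    proof -
      fix j
      have "(\<Sum>l\<in>(UNIV::'n set). U j * U l * (b i * L j * L l)) = (b i * U j * L j) * (\<Sum>l\<in>(UNIV::'n set). U l * L l)" by (simp add: sum_distrib_left mult_ac)
      also have "\<dots> = - (b i * U j * L j)" by (simp add: UL)
      finally show "(\<Sum>l\<in>(UNIV::'n set). U j * U l * (b i * L j * L l)) = - (b i * U j * L j)" .
    qed
    have "(\<Sum>j\<in>(UNIV::'n set). (\<Sum>l\<in>(UNIV::'n set). U j * U l * (b i * L j * L l))) = (\<Sum>j\<in>(UNIV::'n set). - (b i * U j * L j))" by (simp only: inner)
    also have "\<dots> = - (b i * (\<Sum>j\<in>(UNIV::'n set). U j * L j))" by (simp add: sum_distrib_left sum_negf mult_ac)
    also have "\<dots> = b i" by (simp add: UL)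
    finally show "(\<Sum>j\<in>(UNIV::'n set). (\<Sum>l\<in>(UNIV::'n set). U j * U l * (b i * L j * L l))) = b i" .
  qed
  have a13: "\<And>i. (\<Sum>j\<in>(UNIV::'n set). (\<Sum>l\<in>(UNIV::'n set). U j * U l * (B * (P i j * L l)))) = 0"
  proof -
    fix i
    have inner: "\<And>j. (\<Sum>l\<in>(UNIV::'n set). U j * U l * (B * (P i j * L l))) = - (B * U j * P i j)"
    proof -
      fix j
      have "(\<Sum>l\<in>(UNIV::'n set). U j * U l * (B * (P i j * L l))) = (B * U j * P i j) * (\<Sum>l\<in>(UNIV::'n set). U l * L l)" by (simp add: sum_distrib_left mult_ac)
      also have "\<dots> = - (B * U j * P i j)" by (simp add: UL)
      finally show "(\<Sum>l\<in>(UNIV::'n set). U j * U l * (B * (P i j * L l))) = - (B * U j * P i j)" .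
    qed
    have "(\<Sum>j\<in>(UNIV::'n set). (\<Sum>l\<in>(UNIV::'n set). U j * U l * (B * (P i j * L l)))) = (\<Sum>j\<in>(UNIV::'n set). - (B * U j * P i j))" by (simp only: inner)
    also have "\<dots> = - (B * (\<Sum>j\<in>(UNIV::'n set). U j * P i j))" by (simp add: sum_distrib_left sum_negf mult_ac)
    also have "\<dots> = 0" by (simp add: PU)
    finally show "(\<Sum>j\<in>(UNIV::'n set). (\<Sum>l\<in>(UNIV::'n set). U j * U l * (B * (P i j * L l)))) = 0" .
  qed
  have a14: "\<And>i. (\<Sum>j\<in>(UNIV::'n set). (\<Sum>l\<in>(UNIV::'n set). U j * U l * (B * (L j * P i l)))) = 0"
  proof -
    fix i
    have inner: "\<And>j. (\<Sum>l\<in>(UNIV::'n set). U j * U l * (B * (L j * P i l))) = 0"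
    proof -
      fix j
      have "(\<Sum>l\<in>(UNIV::'n set). U j * U l * (B * (L j * P i l))) = (B * U j * L j) * (\<Sum>l\<in>(UNIV::'n set). U l * P i l)" by (simp add: sum_distrib_left mult_ac)
      also have "\<dots> = 0" by (simp add: PU)
      finally show "(\<Sum>l\<in>(UNIV::'n set). U j * U l * (B * (L j * P i l))) = 0" .
    qed
    have "(\<Sum>j\<in>(UNIV::'n set). (\<Sum>l\<in>(UNIV::'n set). U j * U l * (B * (L j * P i l)))) = (\<Sum>j\<in>(UNIV::'n set). 0)" by (simp only: inner)
    also have "\<dots> = 0" by (simp)
    finally show "(\<Sum>j\<in>(UNIV::'n set). (\<Sum>l\<in>(UNIV::'n set). U j * U l * (B * (L j * P i l)))) = 0" .
  qed
  have a21: "\<And>i. (\<Sum>j\<in>(UNIV::'n set). (\<Sum>l\<in>(UNIV::'n set). U j * U l * (al j * G l i))) = Ual * L i"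
  proof -
    fix i
    have inner: "\<And>j. (\<Sum>l\<in>(UNIV::'n set). U j * U l * (al j * G l i)) = U j * al j * L i"
    proof -
      fix j
      have "(\<Sum>l\<in>(UNIV::'n set). U j * U l * (al j * G l i)) = (U j * al j) * (\<Sum>l\<in>(UNIV::'n set). U l * G l i)" by (simp add: sum_distrib_left mult_ac)
      also have "\<dots> = U j * al j * L i" by (simp add: UG)
      finally show "(\<Sum>l\<in>(UNIV::'n set). U j * U l * (al j * G l i)) = U j * al j * L i" .
    qed
    have "(\<Sum>j\<in>(UNIV::'n set). (\<Sum>l\<in>(UNIV::'n set). U j * U l * (al j * G l i))) = (\<Sum>j\<in>(UNIV::'n set). U j * al j * L i)" by (simp only: inner)
    also have "\<dots> = (\<Sum>j\<in>(UNIV::'n set). U j * al j) * L i" by (simp add: sum_distrib_right)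
    also have "\<dots> = Ual * L i" by (simp add: Ual_def Ueta_def)
    finally show "(\<Sum>j\<in>(UNIV::'n set). (\<Sum>l\<in>(UNIV::'n set). U j * U l * (al j * G l i))) = Ual * L i" .
  qed
  have r2: "\<And>i. (\<Sum>j\<in>(UNIV::'n set). (\<Sum>l\<in>(UNIV::'n set). U j * U l * (eta j * G l i))) = Ueta * L i"
  proof -
    fix i
    have inner: "\<And>j. (\<Sum>l\<in>(UNIV::'n set). U j * U l * (eta j * G l i)) = U j * eta j * L i"
    proof -
      fix j
      have "(\<Sum>l\<in>(UNIV::'n set). U j * U l * (eta j * G l i)) = (U j * eta j) * (\<Sum>l\<in>(UNIV::'n set). U l * G l i)" by (simp add: sum_distrib_left mult_ac)
      also have "\<dots> = U j * eta j * L i" by (simp add: UG)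
      finally show "(\<Sum>l\<in>(UNIV::'n set). U j * U l * (eta j * G l i)) = U j * eta j * L i" .
    qed
    have "(\<Sum>j\<in>(UNIV::'n set). (\<Sum>l\<in>(UNIV::'n set). U j * U l * (eta j * G l i))) = (\<Sum>j\<in>(UNIV::'n set). U j * eta j * L i)" by (simp only: inner)
    also have "\<dots> = (\<Sum>j\<in>(UNIV::'n set). U j * eta j) * L i" by (simp add: sum_distrib_right)
    also have "\<dots> = Ueta * L i" by (simp add: Ual_def Ueta_def)
    finally show "(\<Sum>j\<in>(UNIV::'n set). (\<Sum>l\<in>(UNIV::'n set). U j * U l * (eta j * G l i))) = Ueta * L i" .
  qed
  have a22: "\<And>i. (\<Sum>j\<in>(UNIV::'n set). (\<Sum>l\<in>(UNIV::'n set). U j * U l * (b j * L l * L i))) = - Bd * L i"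
  proof -
    fix i
    have inner: "\<And>j. (\<Sum>l\<in>(UNIV::'n set). U j * U l * (b j * L l * L i)) = - (U j * b j * L i)"
    proof -
      fix j
      have "(\<Sum>l\<in>(UNIV::'n set). U j * U l * (b j * L l * L i)) = (U j * b j * L i) * (\<Sum>l\<in>(UNIV::'n set). U l * L l)" by (simp add: sum_distrib_left mult_ac)
      also have "\<dots> = - (U j * b j * L i)" by (simp add: UL)
      finally show "(\<Sum>l\<in>(UNIV::'n set). U j * U l * (b j * L l * L i)) = - (U j * b j * L i)" .
    qed
    have "(\<Sum>j\<in>(UNIV::'n set). (\<Sum>l\<in>(UNIV::'n set). U j * U l * (b j * L l * L i))) = (\<Sum>j\<in>(UNIV::'n set). - (U j * b j * L i))" by (simp only: inner)
    also have "\<dots> = - ((\<Sum>j\<in>(UNIV::'n set). U j * b j) * L i)" by (simp add: sum_distrib_right sum_negf)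
    also have "\<dots> = - Bd * L i" by (simp add: Bd)
    finally show "(\<Sum>j\<in>(UNIV::'n set). (\<Sum>l\<in>(UNIV::'n set). U j * U l * (b j * L l * L i))) = - Bd * L i" .
  qed
  have a23: "\<And>i. (\<Sum>j\<in>(UNIV::'n set). (\<Sum>l\<in>(UNIV::'n set). U j * U l * (B * (P j l * L i)))) = 0"
  proof -
    fix i
    have inner: "\<And>j. (\<Sum>l\<in>(UNIV::'n set). U j * U l * (B * (P j l * L i))) = 0"
    proof -
      fix j
      have "(\<Sum>l\<in>(UNIV::'n set). U j * U l * (B * (P j l * L i))) = (B * U j * L i) * (\<Sum>l\<in>(UNIV::'n set). U l * P j l)" by (simp add: sum_distrib_left mult_ac)
      also have "\<dots> = 0" by (simp add: PU)
      finally show "(\<Sum>l\<in>(UNIV::'n set). U j * U l * (B * (P j l * L i))) = 0" .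
    qed
    have "(\<Sum>j\<in>(UNIV::'n set). (\<Sum>l\<in>(UNIV::'n set). U j * U l * (B * (P j l * L i)))) = (\<Sum>j\<in>(UNIV::'n set). 0)" by (simp only: inner)
    also have "\<dots> = 0" by (simp)
    finally show "(\<Sum>j\<in>(UNIV::'n set). (\<Sum>l\<in>(UNIV::'n set). U j * U l * (B * (P j l * L i)))) = 0" .
  qed
  have a24: "\<And>i. (\<Sum>j\<in>(UNIV::'n set). (\<Sum>l\<in>(UNIV::'n set). U j * U l * (B * (L l * P j i)))) = - B * a i"
  proof -
    fix i
    have inner: "\<And>j. (\<Sum>l\<in>(UNIV::'n set). U j * U l * (B * (L l * P j i))) = - (B * U j * P j i)"
    proof -
      fix j
      have "(\<Sum>l\<in>(UNIV::'n set). U j * U l * (B * (L l * P j i))) = (B * U j * P j i) * (\<Sum>l\<in>(UNIV::'n set). U l * L l)" by (simp add: sum_distrib_left mult_ac)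
      also have "\<dots> = - (B * U j * P j i)" by (simp add: UL)
      finally show "(\<Sum>l\<in>(UNIV::'n set). U j * U l * (B * (L l * P j i))) = - (B * U j * P j i)" .
    qed
    have "(\<Sum>j\<in>(UNIV::'n set). (\<Sum>l\<in>(UNIV::'n set). U j * U l * (B * (L l * P j i)))) = (\<Sum>j\<in>(UNIV::'n set). - (B * U j * P j i))" by (simp only: inner)
    also have "\<dots> = - (B * (\<Sum>j\<in>(UNIV::'n set). U j * P j i))" by (simp add: sum_distrib_left sum_negf mult_ac)
    also have "\<dots> = - B * a i" by (simp add: adef)
    finally show "(\<Sum>j\<in>(UNIV::'n set). (\<Sum>l\<in>(UNIV::'n set). U j * U l * (B * (L l * P j i)))) = - B * a i" .
  qed
  have a31: "\<And>i. (\<Sum>j\<in>(UNIV::'n set). (\<Sum>l\<in>(UNIV::'n set). U j * U l * (al l * G i j))) = L i * Ual"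
  proof -
    fix i
    have inner: "\<And>j. (\<Sum>l\<in>(UNIV::'n set). U j * U l * (al l * G i j)) = U j * G i j * Ual"
    proof -
      fix j
      have "(\<Sum>l\<in>(UNIV::'n set). U j * U l * (al l * G i j)) = (U j * G i j) * (\<Sum>l\<in>(UNIV::'n set). U l * al l)" by (simp add: sum_distrib_left mult_ac)
      also have "\<dots> = U j * G i j * Ual" by (simp add: Ual_def Ueta_def)
      finally show "(\<Sum>l\<in>(UNIV::'n set). U j * U l * (al l * G i j)) = U j * G i j * Ual" .
    qed
    have "(\<Sum>j\<in>(UNIV::'n set). (\<Sum>l\<in>(UNIV::'n set). U j * U l * (al l * G i j))) = (\<Sum>j\<in>(UNIV::'n set). U j * G i j * Ual)" by (simp only: inner)
    also have "\<dots> = (\<Sum>j\<in>(UNIV::'n set). U j * G i j) * Ual" by (simp add: sum_distrib_right)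
    also have "\<dots> = L i * Ual" by (simp add: UG2)
    finally show "(\<Sum>j\<in>(UNIV::'n set). (\<Sum>l\<in>(UNIV::'n set). U j * U l * (al l * G i j))) = L i * Ual" .
  qed
  have r3: "\<And>i. (\<Sum>j\<in>(UNIV::'n set). (\<Sum>l\<in>(UNIV::'n set). U j * U l * (eta l * G i j))) = L i * Ueta"
  proof -
    fix i
    have inner: "\<And>j. (\<Sum>l\<in>(UNIV::'n set). U j * U l * (eta l * G i j)) = U j * G i j * Ueta"
    proof -
      fix j
      have "(\<Sum>l\<in>(UNIV::'n set). U j * U l * (eta l * G i j)) = (U j * G i j) * (\<Sum>l\<in>(UNIV::'n set). U l * eta l)" by (simp add: sum_distrib_left mult_ac)
      also have "\<dots> = U j * G i j * Ueta" by (simp add: Ual_def Ueta_def)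
      finally show "(\<Sum>l\<in>(UNIV::'n set). U j * U l * (eta l * G i j)) = U j * G i j * Ueta" .
    qed
    have "(\<Sum>j\<in>(UNIV::'n set). (\<Sum>l\<in>(UNIV::'n set). U j * U l * (eta l * G i j))) = (\<Sum>j\<in>(UNIV::'n set). U j * G i j * Ueta)" by (simp only: inner)
    also have "\<dots> = (\<Sum>j\<in>(UNIV::'n set). U j * G i j) * Ueta" by (simp add: sum_distrib_right)
    also have "\<dots> = L i * Ueta" by (simp add: UG2)
    finally show "(\<Sum>j\<in>(UNIV::'n set). (\<Sum>l\<in>(UNIV::'n set). U j * U l * (eta l * G i j))) = L i * Ueta" .
  qed
  have a32: "\<And>i. (\<Sum>j\<in>(UNIV::'n set). (\<Sum>l\<in>(UNIV::'n set). U j * U l * (b l * L i * L j))) = - Bd * L i"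
  proof -
    fix i
    have inner: "\<And>j. (\<Sum>l\<in>(UNIV::'n set). U j * U l * (b l * L i * L j)) = U j * L i * L j * Bd"
    proof -
      fix j
      have "(\<Sum>l\<in>(UNIV::'n set). U j * U l * (b l * L i * L j)) = (U j * L i * L j) * (\<Sum>l\<in>(UNIV::'n set). U l * b l)" by (simp add: sum_distrib_left mult_ac)
      also have "\<dots> = U j * L i * L j * Bd" by (simp add: Bd)
      finally show "(\<Sum>l\<in>(UNIV::'n set). U j * U l * (b l * L i * L j)) = U j * L i * L j * Bd" .
    qed
    have "(\<Sum>j\<in>(UNIV::'n set). (\<Sum>l\<in>(UNIV::'n set). U j * U l * (b l * L i * L j))) = (\<Sum>j\<in>(UNIV::'n set). U j * L i * L j * Bd)" by (simp only: inner)
    also have "\<dots> = (\<Sum>j\<in>(UNIV::'n set). U j * L j) * (L i * Bd)" by (simp add: sum_distrib_left sum_distrib_right mult_ac)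
    also have "\<dots> = - Bd * L i" by (simp add: UL)
    finally show "(\<Sum>j\<in>(UNIV::'n set). (\<Sum>l\<in>(UNIV::'n set). U j * U l * (b l * L i * L j))) = - Bd * L i" .
  qed
  have a33: "\<And>i. (\<Sum>j\<in>(UNIV::'n set). (\<Sum>l\<in>(UNIV::'n set). U j * U l * (B * (P l i * L j)))) = - B * a i"
  proof -
    fix i
    have inner: "\<And>j. (\<Sum>l\<in>(UNIV::'n set). U j * U l * (B * (P l i * L j))) = B * U j * L j * a i"
    proof -
      fix j
      have "(\<Sum>l\<in>(UNIV::'n set). U j * U l * (B * (P l i * L j))) = (B * U j * L j) * (\<Sum>l\<in>(UNIV::'n set). U l * P l i)" by (simp add: sum_distrib_left mult_ac)
      also have "\<dots> = B * U j * L j * a i" by (simp add: UPa)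
      finally show "(\<Sum>l\<in>(UNIV::'n set). U j * U l * (B * (P l i * L j))) = B * U j * L j * a i" .
    qed
    have "(\<Sum>j\<in>(UNIV::'n set). (\<Sum>l\<in>(UNIV::'n set). U j * U l * (B * (P l i * L j)))) = (\<Sum>j\<in>(UNIV::'n set). B * U j * L j * a i)" by (simp only: inner)
    also have "\<dots> = (\<Sum>j\<in>(UNIV::'n set). U j * L j) * (B * a i)" by (simp add: sum_distrib_left sum_distrib_right mult_ac)
    also have "\<dots> = - B * a i" by (simp add: UL)
    finally show "(\<Sum>j\<in>(UNIV::'n set). (\<Sum>l\<in>(UNIV::'n set). U j * U l * (B * (P l i * L j)))) = - B * a i" .
  qed
  have a34: "\<And>i. (\<Sum>j\<in>(UNIV::'n set). (\<Sum>l\<in>(UNIV::'n set). U j * U l * (B * (L i * P l j)))) = 0"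
  proof -
    fix i
    have inner: "\<And>j. (\<Sum>l\<in>(UNIV::'n set). U j * U l * (B * (L i * P l j))) = B * L i * (U j * a j)"
    proof -
      fix j
      have "(\<Sum>l\<in>(UNIV::'n set). U j * U l * (B * (L i * P l j))) = (B * L i * U j) * (\<Sum>l\<in>(UNIV::'n set). U l * P l j)" by (simp add: sum_distrib_left mult_ac)
      also have "\<dots> = B * L i * (U j * a j)" by (simp add: UPa)
      finally show "(\<Sum>l\<in>(UNIV::'n set). U j * U l * (B * (L i * P l j))) = B * L i * (U j * a j)" .
    qed
    have "(\<Sum>j\<in>(UNIV::'n set). (\<Sum>l\<in>(UNIV::'n set). U j * U l * (B * (L i * P l j)))) = (\<Sum>j\<in>(UNIV::'n set). B * L i * (U j * a j))" by (simp only: inner)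
    also have "\<dots> = B * L i * (\<Sum>j\<in>(UNIV::'n set). U j * a j)" by (simp add: sum_distrib_left)
    also have "\<dots> = 0" by (simp add: Ua)
    finally show "(\<Sum>j\<in>(UNIV::'n set). (\<Sum>l\<in>(UNIV::'n set). U j * U l * (B * (L i * P l j)))) = 0" .
  qed
  have C1: "\<And>i. - al i + b i + 2 * Ual * L i - 2 * Bd * L i - 2 * B * a i + eta i - 2 * Ueta * L i = 0"
  proof -
    fix i
    have "(\<Sum>j\<in>UNIV. \<Sum>l\<in>UNIV. U j * U l * (KT i j l + KT j l i + KT l i j))
       = (\<Sum>j\<in>UNIV. \<Sum>l\<in>UNIV. U j * U l * (eta i * G j l + eta j * G l i + eta l * G i j))"
      using E by simp
    then have "- al i + b i + 0 + 0 + (Ual * L i + - Bd * L i + 0 + - B * a i) + (L i * Ual + - Bd * L i + - B * a i + 0)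
       = - eta i + Ueta * L i + L i * Ueta"
      by (simp only: KT distrib_left sum.distrib a11 a12 a13 a14 a21 a22 a23 a24 a31 a32 a33 a34 r1 r2 r3 add.assoc)
    then show "- al i + b i + 2 * Ual * L i - 2 * Bd * L i - 2 * B * a i + eta i - 2 * Ueta * L i = 0"
      by (simp add: algebra_simps)
  qed
  have Ucon: "(\<Sum>i\<in>UNIV. U i * (- al i + b i + 2 * Ual * L i - 2 * Bd * L i - 2 * B * a i + eta i - 2 * Ueta * L i))
     = - (\<Sum>i\<in>UNIV. U i * al i) + (\<Sum>i\<in>UNIV. U i * b i) + 2 * Ual * (\<Sum>i\<in>UNIV. U i * L i)
       - 2 * Bd * (\<Sum>i\<in>UNIV. U i * L i) - 2 * B * (\<Sum>i\<in>UNIV. U i * a i)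
       + (\<Sum>i\<in>UNIV. U i * eta i) - 2 * Ueta * (\<Sum>i\<in>UNIV. U i * L i)"
    by (simp add: algebra_simps sum.distrib sum_subtractf sum_distrib_left sum_negf)
  have "(\<Sum>i\<in>UNIV. U i * (- al i + b i + 2 * Ual * L i - 2 * Bd * L i - 2 * B * a i + eta i - 2 * Ueta * L i)) = 0"
    by (simp only: C1 mult_zero_right sum.neutral_const)
  then have "- Ual + Bd + 2 * Ual * (-1) - 2 * Bd * (-1) - 2 * B * 0 + Ueta - 2 * Ueta * (-1) = 0"
    unfolding Ucon UL Ua Ual_def[symmetric] Ueta_def[symmetric] Bd[symmetric] .
  then have Ueta: "Ueta = Ual - Bd" by simp
  have etaf: "\<And>i. eta i = al i - b i + 2 * B * a i" using C1 Ueta by (simp add: algebra_simps)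
  have GiL: "\<And>j. (\<Sum>l\<in>UNIV. Gi j l * L l) = U j"
  proof -
    fix j
    have "(\<Sum>l\<in>UNIV. Gi j l * L l) = (\<Sum>l\<in>UNIV. \<Sum>k\<in>UNIV. Gi j l * (G l k * U k))"
      by (simp add: Ldef sum_distrib_left)
    also have "\<dots> = (\<Sum>k\<in>UNIV. \<Sum>l\<in>UNIV. Gi j l * (G l k * U k))" by (rule sum.swap)
    also have "\<dots> = (\<Sum>k\<in>UNIV. (\<Sum>l\<in>UNIV. Gi j l * G l k) * U k)" by (simp add: sum_distrib_left sum_distrib_right mult_ac)
    also have "\<dots> = U j" by (simp add: GiG)
    finally show "(\<Sum>l\<in>UNIV. Gi j l * L l) = U j" .
  qed
  have GiL2: "\<And>l. (\<Sum>j\<in>UNIV. Gi j l * L j) = U l"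
  proof -
    fix l
    have "(\<Sum>j\<in>UNIV. Gi j l * L j) = (\<Sum>j\<in>UNIV. Gi l j * L j)"
      by (rule sum.cong[OF refl]) (metis Gis)
    then show "(\<Sum>j\<in>UNIV. Gi j l * L j) = U l" by (simp add: GiL)
  qed
  have GiGd: "\<And>j. (\<Sum>l\<in>UNIV. Gi j l * G j l) = 1"
  proof -
    fix j
    have "(\<Sum>l\<in>UNIV. Gi j l * G j l) = (\<Sum>l\<in>UNIV. Gi j l * G l j)"
      by (rule sum.cong[OF refl]) (metis Gs)
    then show "(\<Sum>l\<in>UNIV. Gi j l * G j l) = 1" by (simp add: GiG)
  qed
  have trP2: "(\<Sum>j\<in>UNIV. \<Sum>l\<in>UNIV. Gi j l * P l j) = trP"
  proof -
    have "(\<Sum>j\<in>UNIV. \<Sum>l\<in>UNIV. Gi j l * P l j) = (\<Sum>l\<in>UNIV. \<Sum>j\<in>UNIV. Gi j l * P l j)" by (rule sum.swap)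
    also have "\<dots> = (\<Sum>l\<in>UNIV. \<Sum>j\<in>UNIV. Gi l j * P l j)"
      by (rule sum.cong[OF refl], rule sum.cong[OF refl]) (metis Gis)
    finally show ?thesis by (simp add: trP)
  qed
  have q11: "\<And>i. (\<Sum>j\<in>(UNIV::'n set). (\<Sum>l\<in>(UNIV::'n set). Gi j l * (al i * G j l))) = real CARD('n) * al i"
  proof -
    fix i
    have inner: "\<And>j. (\<Sum>l\<in>(UNIV::'n set). Gi j l * (al i * G j l)) = al i"
    proof -
      fix j
      have "(\<Sum>l\<in>(UNIV::'n set). Gi j l * (al i * G j l)) = (al i) * (\<Sum>l\<in>(UNIV::'n set). Gi j l * G j l)" by (simp add: sum_distrib_left mult_ac)
      also have "\<dots> = al i" by (simp add: GiGd)
      finally show "(\<Sum>l\<in>(UNIV::'n set). Gi j l * (al i * G j l)) = al i" .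
    qed
    have "(\<Sum>j\<in>(UNIV::'n set). (\<Sum>l\<in>(UNIV::'n set). Gi j l * (al i * G j l))) = (\<Sum>j\<in>(UNIV::'n set). al i)" by (simp only: inner)
    also have "\<dots> = real CARD('n) * al i" by (simp)
    finally show "(\<Sum>j\<in>(UNIV::'n set). (\<Sum>l\<in>(UNIV::'n set). Gi j l * (al i * G j l))) = real CARD('n) * al i" .
  qed
  have s1: "\<And>i. (\<Sum>j\<in>(UNIV::'n set). (\<Sum>l\<in>(UNIV::'n set). Gi j l * (eta i * G j l))) = real CARD('n) * eta i"
  proof -
    fix i
    have inner: "\<And>j. (\<Sum>l\<in>(UNIV::'n set). Gi j l * (eta i * G j l)) = eta i"
    proof -
      fix j
      have "(\<Sum>l\<in>(UNIV::'n set). Gi j l * (eta i * G j l)) = (eta i) * (\<Sum>l\<in>(UNIV::'n set). Gi j l * G j l)" by (simp add: sum_distrib_left mult_ac)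
      also have "\<dots> = eta i" by (simp add: GiGd)
      finally show "(\<Sum>l\<in>(UNIV::'n set). Gi j l * (eta i * G j l)) = eta i" .
    qed
    have "(\<Sum>j\<in>(UNIV::'n set). (\<Sum>l\<in>(UNIV::'n set). Gi j l * (eta i * G j l))) = (\<Sum>j\<in>(UNIV::'n set). eta i)" by (simp only: inner)
    also have "\<dots> = real CARD('n) * eta i" by (simp)
    finally show "(\<Sum>j\<in>(UNIV::'n set). (\<Sum>l\<in>(UNIV::'n set). Gi j l * (eta i * G j l))) = real CARD('n) * eta i" .
  qed
  have q12: "\<And>i. (\<Sum>j\<in>(UNIV::'n set). (\<Sum>l\<in>(UNIV::'n set). Gi j l * (b i * L j * L l))) = - b i"
  proof -
    fix i
    have inner: "\<And>j. (\<Sum>l\<in>(UNIV::'n set). Gi j l * (b i * L j * L l)) = b i * L j * U j"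
    proof -
      fix j
      have "(\<Sum>l\<in>(UNIV::'n set). Gi j l * (b i * L j * L l)) = (b i * L j) * (\<Sum>l\<in>(UNIV::'n set). Gi j l * L l)" by (simp add: sum_distrib_left mult_ac)
      also have "\<dots> = b i * L j * U j" by (simp add: GiL)
      finally show "(\<Sum>l\<in>(UNIV::'n set). Gi j l * (b i * L j * L l)) = b i * L j * U j" .
    qed
    have "(\<Sum>j\<in>(UNIV::'n set). (\<Sum>l\<in>(UNIV::'n set). Gi j l * (b i * L j * L l))) = (\<Sum>j\<in>(UNIV::'n set). b i * L j * U j)" by (simp only: inner)
    also have "\<dots> = b i * (\<Sum>j\<in>(UNIV::'n set). U j * L j)" by (simp add: sum_distrib_left mult_ac)
    also have "\<dots> = - b i" by (simp add: UL)
    finally show "(\<Sum>j\<in>(UNIV::'n set). (\<Sum>l\<in>(UNIV::'n set). Gi j l * (b i * L j * L l))) = - b i" .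
  qed
  have q13: "\<And>i. (\<Sum>j\<in>(UNIV::'n set). (\<Sum>l\<in>(UNIV::'n set). Gi j l * (B * (P i j * L l)))) = 0"
  proof -
    fix i
    have inner: "\<And>j. (\<Sum>l\<in>(UNIV::'n set). Gi j l * (B * (P i j * L l))) = B * P i j * U j"
    proof -
      fix j
      have "(\<Sum>l\<in>(UNIV::'n set). Gi j l * (B * (P i j * L l))) = (B * P i j) * (\<Sum>l\<in>(UNIV::'n set). Gi j l * L l)" by (simp add: sum_distrib_left mult_ac)
      also have "\<dots> = B * P i j * U j" by (simp add: GiL)
      finally show "(\<Sum>l\<in>(UNIV::'n set). Gi j l * (B * (P i j * L l))) = B * P i j * U j" .
    qed
    have "(\<Sum>j\<in>(UNIV::'n set). (\<Sum>l\<in>(UNIV::'n set). Gi j l * (B * (P i j * L l)))) = (\<Sum>j\<in>(UNIV::'n set). B * P i j * U j)" by (simp only: inner)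
    also have "\<dots> = B * (\<Sum>j\<in>(UNIV::'n set). U j * P i j)" by (simp add: sum_distrib_left mult_ac)
    also have "\<dots> = 0" by (simp add: PU)
    finally show "(\<Sum>j\<in>(UNIV::'n set). (\<Sum>l\<in>(UNIV::'n set). Gi j l * (B * (P i j * L l)))) = 0" .
  qed
  have q14: "\<And>i. (\<Sum>j\<in>(UNIV::'n set). (\<Sum>l\<in>(UNIV::'n set). Gi j l * (B * (L j * P i l)))) = 0"
  proof -
    fix i
    have inner: "\<And>l. (\<Sum>j\<in>(UNIV::'n set). Gi j l * (B * (L j * P i l))) = B * P i l * U l"
    proof -
      fix l
      have "(\<Sum>j\<in>(UNIV::'n set). Gi j l * (B * (L j * P i l))) = (B * P i l) * (\<Sum>j\<in>(UNIV::'n set). Gi j l * L j)" by (simp add: sum_distrib_left mult_ac)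
      also have "\<dots> = B * P i l * U l" by (simp add: GiL2)
      finally show "(\<Sum>j\<in>(UNIV::'n set). Gi j l * (B * (L j * P i l))) = B * P i l * U l" .
    qed
    have "(\<Sum>j\<in>(UNIV::'n set). (\<Sum>l\<in>(UNIV::'n set). Gi j l * (B * (L j * P i l)))) = (\<Sum>l\<in>(UNIV::'n set). (\<Sum>j\<in>(UNIV::'n set). Gi j l * (B * (L j * P i l))))" by (rule sum.swap)
    also have "\<dots> = (\<Sum>l\<in>(UNIV::'n set). B * P i l * U l)" by (simp only: inner)
    also have "\<dots> = B * (\<Sum>l\<in>(UNIV::'n set). U l * P i l)" by (simp add: sum_distrib_left mult_ac)
    also have "\<dots> = 0" by (simp add: PU)
    finally show "(\<Sum>j\<in>(UNIV::'n set). (\<Sum>l\<in>(UNIV::'n set). Gi j l * (B * (L j * P i l)))) = 0" .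
  qed
  have q21: "\<And>i. (\<Sum>j\<in>(UNIV::'n set). (\<Sum>l\<in>(UNIV::'n set). Gi j l * (al j * G l i))) = al i"
  proof -
    fix i
    have inner: "\<And>j. (\<Sum>l\<in>(UNIV::'n set). Gi j l * (al j * G l i)) = al j * (if j = i then 1 else 0)"
    proof -
      fix j
      have "(\<Sum>l\<in>(UNIV::'n set). Gi j l * (al j * G l i)) = al j * (\<Sum>l\<in>(UNIV::'n set). Gi j l * G l i)" by (simp add: sum_distrib_left mult_ac)
      also have "\<dots> = al j * (if j = i then 1 else 0)" by (simp add: GiG)
      finally show "(\<Sum>l\<in>(UNIV::'n set). Gi j l * (al j * G l i)) = al j * (if j = i then 1 else 0)" .
    qed
    have "(\<Sum>j\<in>(UNIV::'n set). (\<Sum>l\<in>(UNIV::'n set). Gi j l * (al j * G l i))) = (\<Sum>j\<in>(UNIV::'n set). al j * (if j = i then 1 else 0))" by (simp only: inner)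
    also have "\<dots> = al i" by (simp)
    finally show "(\<Sum>j\<in>(UNIV::'n set). (\<Sum>l\<in>(UNIV::'n set). Gi j l * (al j * G l i))) = al i" .
  qed
  have s2: "\<And>i. (\<Sum>j\<in>(UNIV::'n set). (\<Sum>l\<in>(UNIV::'n set). Gi j l * (eta j * G l i))) = eta i"
  proof -
    fix i
    have inner: "\<And>j. (\<Sum>l\<in>(UNIV::'n set). Gi j l * (eta j * G l i)) = eta j * (if j = i then 1 else 0)"
    proof -
      fix j
      have "(\<Sum>l\<in>(UNIV::'n set). Gi j l * (eta j * G l i)) = eta j * (\<Sum>l\<in>(UNIV::'n set). Gi j l * G l i)" by (simp add: sum_distrib_left mult_ac)
      also have "\<dots> = eta j * (if j = i then 1 else 0)" by (simp add: GiG)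
      finally show "(\<Sum>l\<in>(UNIV::'n set). Gi j l * (eta j * G l i)) = eta j * (if j = i then 1 else 0)" .
    qed
    have "(\<Sum>j\<in>(UNIV::'n set). (\<Sum>l\<in>(UNIV::'n set). Gi j l * (eta j * G l i))) = (\<Sum>j\<in>(UNIV::'n set). eta j * (if j = i then 1 else 0))" by (simp only: inner)
    also have "\<dots> = eta i" by (simp)
    finally show "(\<Sum>j\<in>(UNIV::'n set). (\<Sum>l\<in>(UNIV::'n set). Gi j l * (eta j * G l i))) = eta i" .
  qed
  have q22: "\<And>i. (\<Sum>j\<in>(UNIV::'n set). (\<Sum>l\<in>(UNIV::'n set). Gi j l * (b j * L l * L i))) = Bd * L i"
  proof -
    fix i
    have inner: "\<And>j. (\<Sum>l\<in>(UNIV::'n set). Gi j l * (b j * L l * L i)) = b j * L i * U j"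
    proof -
      fix j
      have "(\<Sum>l\<in>(UNIV::'n set). Gi j l * (b j * L l * L i)) = (b j * L i) * (\<Sum>l\<in>(UNIV::'n set). Gi j l * L l)" by (simp add: sum_distrib_left mult_ac)
      also have "\<dots> = b j * L i * U j" by (simp add: GiL)
      finally show "(\<Sum>l\<in>(UNIV::'n set). Gi j l * (b j * L l * L i)) = b j * L i * U j" .
    qed
    have "(\<Sum>j\<in>(UNIV::'n set). (\<Sum>l\<in>(UNIV::'n set). Gi j l * (b j * L l * L i))) = (\<Sum>j\<in>(UNIV::'n set). b j * L i * U j)" by (simp only: inner)
    also have "\<dots> = (\<Sum>j\<in>(UNIV::'n set). U j * b j) * L i" by (simp add: sum_distrib_left sum_distrib_right mult_ac)
    also have "\<dots> = Bd * L i" by (simp add: Bd)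
    finally show "(\<Sum>j\<in>(UNIV::'n set). (\<Sum>l\<in>(UNIV::'n set). Gi j l * (b j * L l * L i))) = Bd * L i" .
  qed
  have q23: "\<And>i. (\<Sum>j\<in>(UNIV::'n set). (\<Sum>l\<in>(UNIV::'n set). Gi j l * (B * (P j l * L i)))) = B * L i * trP"
  proof -
    fix i
    have inner: "\<And>j. (\<Sum>l\<in>(UNIV::'n set). Gi j l * (B * (P j l * L i))) = (B * L i) * (\<Sum>l\<in>(UNIV::'n set). Gi j l * P j l)"
    proof -
      fix j
      show "(\<Sum>l\<in>(UNIV::'n set). Gi j l * (B * (P j l * L i))) = (B * L i) * (\<Sum>l\<in>(UNIV::'n set). Gi j l * P j l)" by (simp add: sum_distrib_left mult_ac)
    qed
    have "(\<Sum>j\<in>(UNIV::'n set). (\<Sum>l\<in>(UNIV::'n set). Gi j l * (B * (P j l * L i)))) = (\<Sum>j\<in>(UNIV::'n set). (B * L i) * (\<Sum>l\<in>(UNIV::'n set). Gi j l * P j l))" by (simp only: inner)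
    also have "\<dots> = (B * L i) * (\<Sum>j\<in>(UNIV::'n set). (\<Sum>l\<in>(UNIV::'n set). Gi j l * P j l))" by (simp add: sum_distrib_left mult_ac)
    also have "\<dots> = B * L i * trP" by (simp add: trP)
    finally show "(\<Sum>j\<in>(UNIV::'n set). (\<Sum>l\<in>(UNIV::'n set). Gi j l * (B * (P j l * L i)))) = B * L i * trP" .
  qed
  have q24: "\<And>i. (\<Sum>j\<in>(UNIV::'n set). (\<Sum>l\<in>(UNIV::'n set). Gi j l * (B * (L l * P j i)))) = B * a i"
  proof -
    fix i
    have inner: "\<And>j. (\<Sum>l\<in>(UNIV::'n set). Gi j l * (B * (L l * P j i))) = B * P j i * U j"
    proof -
      fix j
      have "(\<Sum>l\<in>(UNIV::'n set). Gi j l * (B * (L l * P j i))) = (B * P j i) * (\<Sum>l\<in>(UNIV::'n set). Gi j l * L l)" by (simp add: sum_distrib_left mult_ac)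
      also have "\<dots> = B * P j i * U j" by (simp add: GiL)
      finally show "(\<Sum>l\<in>(UNIV::'n set). Gi j l * (B * (L l * P j i))) = B * P j i * U j" .
    qed
    have "(\<Sum>j\<in>(UNIV::'n set). (\<Sum>l\<in>(UNIV::'n set). Gi j l * (B * (L l * P j i)))) = (\<Sum>j\<in>(UNIV::'n set). B * P j i * U j)" by (simp only: inner)
    also have "\<dots> = B * (\<Sum>j\<in>(UNIV::'n set). U j * P j i)" by (simp add: sum_distrib_left mult_ac)
    also have "\<dots> = B * a i" by (simp add: adef)
    finally show "(\<Sum>j\<in>(UNIV::'n set). (\<Sum>l\<in>(UNIV::'n set). Gi j l * (B * (L l * P j i)))) = B * a i" .
  qed
  have q31: "\<And>i. (\<Sum>j\<in>(UNIV::'n set). (\<Sum>l\<in>(UNIV::'n set). Gi j l * (al l * G i j))) = al i"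
  proof -
    fix i
    have inner: "\<And>l. (\<Sum>j\<in>(UNIV::'n set). Gi j l * (al l * G i j)) = al l * (if i = l then 1 else 0)"
    proof -
      fix l
      have "(\<Sum>j\<in>(UNIV::'n set). Gi j l * (al l * G i j)) = al l * (\<Sum>j\<in>(UNIV::'n set). G i j * Gi j l)" by (simp add: sum_distrib_left mult_ac)
      also have "\<dots> = al l * (if i = l then 1 else 0)" by (simp add: GGi)
      finally show "(\<Sum>j\<in>(UNIV::'n set). Gi j l * (al l * G i j)) = al l * (if i = l then 1 else 0)" .
    qed
    have "(\<Sum>j\<in>(UNIV::'n set). (\<Sum>l\<in>(UNIV::'n set). Gi j l * (al l * G i j))) = (\<Sum>l\<in>(UNIV::'n set). (\<Sum>j\<in>(UNIV::'n set). Gi j l * (al l * G i j)))" by (rule sum.swap)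
    also have "\<dots> = (\<Sum>l\<in>(UNIV::'n set). al l * (if i = l then 1 else 0))" by (simp only: inner)
    also have "\<dots> = al i" by (simp)
    finally show "(\<Sum>j\<in>(UNIV::'n set). (\<Sum>l\<in>(UNIV::'n set). Gi j l * (al l * G i j))) = al i" .
  qed
  have s3: "\<And>i. (\<Sum>j\<in>(UNIV::'n set). (\<Sum>l\<in>(UNIV::'n set). Gi j l * (eta l * G i j))) = eta i"
  proof -
    fix i
    have inner: "\<And>l. (\<Sum>j\<in>(UNIV::'n set). Gi j l * (eta l * G i j)) = eta l * (if i = l then 1 else 0)"
    proof -
      fix l
      have "(\<Sum>j\<in>(UNIV::'n set). Gi j l * (eta l * G i j)) = eta l * (\<Sum>j\<in>(UNIV::'n set). G i j * Gi j l)" by (simp add: sum_distrib_left mult_ac)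
      also have "\<dots> = eta l * (if i = l then 1 else 0)" by (simp add: GGi)
      finally show "(\<Sum>j\<in>(UNIV::'n set). Gi j l * (eta l * G i j)) = eta l * (if i = l then 1 else 0)" .
    qed
    have "(\<Sum>j\<in>(UNIV::'n set). (\<Sum>l\<in>(UNIV::'n set). Gi j l * (eta l * G i j))) = (\<Sum>l\<in>(UNIV::'n set). (\<Sum>j\<in>(UNIV::'n set). Gi j l * (eta l * G i j)))" by (rule sum.swap)
    also have "\<dots> = (\<Sum>l\<in>(UNIV::'n set). eta l * (if i = l then 1 else 0))" by (simp only: inner)
    also have "\<dots> = eta i" by (simp)
    finally show "(\<Sum>j\<in>(UNIV::'n set). (\<Sum>l\<in>(UNIV::'n set). Gi j l * (eta l * G i j))) = eta i" .
  qed
  have q32: "\<And>i. (\<Sum>j\<in>(UNIV::'n set). (\<Sum>l\<in>(UNIV::'n set). Gi j l * (b l * L i * L j))) = Bd * L i"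
  proof -
    fix i
    have inner: "\<And>l. (\<Sum>j\<in>(UNIV::'n set). Gi j l * (b l * L i * L j)) = b l * L i * U l"
    proof -
      fix l
      have "(\<Sum>j\<in>(UNIV::'n set). Gi j l * (b l * L i * L j)) = (b l * L i) * (\<Sum>j\<in>(UNIV::'n set). Gi j l * L j)" by (simp add: sum_distrib_left mult_ac)
      also have "\<dots> = b l * L i * U l" by (simp add: GiL2)
      finally show "(\<Sum>j\<in>(UNIV::'n set). Gi j l * (b l * L i * L j)) = b l * L i * U l" .
    qed
    have "(\<Sum>j\<in>(UNIV::'n set). (\<Sum>l\<in>(UNIV::'n set). Gi j l * (b l * L i * L j))) = (\<Sum>l\<in>(UNIV::'n set). (\<Sum>j\<in>(UNIV::'n set). Gi j l * (b l * L i * L j)))" by (rule sum.swap)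
    also have "\<dots> = (\<Sum>l\<in>(UNIV::'n set). b l * L i * U l)" by (simp only: inner)
    also have "\<dots> = (\<Sum>l\<in>(UNIV::'n set). U l * b l) * L i" by (simp add: sum_distrib_left sum_distrib_right mult_ac)
    also have "\<dots> = Bd * L i" by (simp add: Bd)
    finally show "(\<Sum>j\<in>(UNIV::'n set). (\<Sum>l\<in>(UNIV::'n set). Gi j l * (b l * L i * L j))) = Bd * L i" .
  qed
  have q33: "\<And>i. (\<Sum>j\<in>(UNIV::'n set). (\<Sum>l\<in>(UNIV::'n set). Gi j l * (B * (P l i * L j)))) = B * a i"
  proof -
    fix i
    have inner: "\<And>l. (\<Sum>j\<in>(UNIV::'n set). Gi j l * (B * (P l i * L j))) = B * P l i * U l"
    proof -
      fix l
      have "(\<Sum>j\<in>(UNIV::'n set). Gi j l * (B * (P l i * L j))) = (B * P l i) * (\<Sum>j\<in>(UNIV::'n set). Gi j l * L j)" by (simp add: sum_distrib_left mult_ac)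
      also have "\<dots> = B * P l i * U l" by (simp add: GiL2)
      finally show "(\<Sum>j\<in>(UNIV::'n set). Gi j l * (B * (P l i * L j))) = B * P l i * U l" .
    qed
    have "(\<Sum>j\<in>(UNIV::'n set). (\<Sum>l\<in>(UNIV::'n set). Gi j l * (B * (P l i * L j)))) = (\<Sum>l\<in>(UNIV::'n set). (\<Sum>j\<in>(UNIV::'n set). Gi j l * (B * (P l i * L j))))" by (rule sum.swap)
    also have "\<dots> = (\<Sum>l\<in>(UNIV::'n set). B * P l i * U l)" by (simp only: inner)
    also have "\<dots> = B * (\<Sum>l\<in>(UNIV::'n set). U l * P l i)" by (simp add: sum_distrib_left mult_ac)
    also have "\<dots> = B * a i" by (simp add: UPa)
    finally show "(\<Sum>j\<in>(UNIV::'n set). (\<Sum>l\<in>(UNIV::'n set). Gi j l * (B * (P l i * L j)))) = B * a i" .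
  qed
  have q34: "\<And>i. (\<Sum>j\<in>(UNIV::'n set). (\<Sum>l\<in>(UNIV::'n set). Gi j l * (B * (L i * P l j)))) = B * L i * trP"
  proof -
    fix i
    have inner: "\<And>j. (\<Sum>l\<in>(UNIV::'n set). Gi j l * (B * (L i * P l j))) = (B * L i) * (\<Sum>l\<in>(UNIV::'n set). Gi j l * P l j)"
    proof -
      fix j
      show "(\<Sum>l\<in>(UNIV::'n set). Gi j l * (B * (L i * P l j))) = (B * L i) * (\<Sum>l\<in>(UNIV::'n set). Gi j l * P l j)" by (simp add: sum_distrib_left mult_ac)
    qed
    have "(\<Sum>j\<in>(UNIV::'n set). (\<Sum>l\<in>(UNIV::'n set). Gi j l * (B * (L i * P l j)))) = (\<Sum>j\<in>(UNIV::'n set). (B * L i) * (\<Sum>l\<in>(UNIV::'n set). Gi j l * P l j))" by (simp only: inner)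
    also have "\<dots> = (B * L i) * (\<Sum>j\<in>(UNIV::'n set). (\<Sum>l\<in>(UNIV::'n set). Gi j l * P l j))" by (simp add: sum_distrib_left mult_ac)
    also have "\<dots> = B * L i * trP" by (simp add: trP2)
    finally show "(\<Sum>j\<in>(UNIV::'n set). (\<Sum>l\<in>(UNIV::'n set). Gi j l * (B * (L i * P l j)))) = B * L i * trP" .
  qed
  have C2: "\<And>i. real CARD('n) * al i + - b i + 0 + 0 + (al i + Bd * L i + B * L i * trP + B * a i)
       + (al i + Bd * L i + B * a i + B * L i * trP) = real CARD('n) * eta i + eta i + eta i"
  proof -
    fix i
    have "(\<Sum>j\<in>UNIV. \<Sum>l\<in>UNIV. Gi j l * (KT i j l + KT j l i + KT l i j))
       = (\<Sum>j\<in>UNIV. \<Sum>l\<in>UNIV. Gi j l * (eta i * G j l + eta j * G l i + eta l * G i j))"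
      using E by simp
    then show "real CARD('n) * al i + - b i + 0 + 0 + (al i + Bd * L i + B * L i * trP + B * a i)
       + (al i + Bd * L i + B * a i + B * L i * trP) = real CARD('n) * eta i + eta i + eta i"
      by (simp only: KT distrib_left sum.distrib q11 q12 q13 q14 q21 q22 q23 q24 q31 q32 q33 q34 s1 s2 s3 add.assoc)
  qed
  define n where "n = real CARD('n)"
  have X: "\<And>i. (n + 1) * (b i - 2 * B * a i) + (2 * Bd + 2 * B * trP) * L i = 0"
    using C2 etaf unfolding n_def[symmetric] by (simp add: algebra_simps)
  have Xc: "(\<Sum>i\<in>UNIV. U i * ((n + 1) * (b i - 2 * B * a i) + (2 * Bd + 2 * B * trP) * L i))
     = (n + 1) * (\<Sum>i\<in>UNIV. U i * b i) - (n + 1) * 2 * B * (\<Sum>i\<in>UNIV. U i * a i)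
      + (2 * Bd + 2 * B * trP) * (\<Sum>i\<in>UNIV. U i * L i)"
    by (simp add: algebra_simps sum.distrib sum_subtractf sum_distrib_left)
  have "(n + 1) * Bd - (n + 1) * 2 * B * 0 + (2 * Bd + 2 * B * trP) * (-1) = 0"
    using Xc unfolding X UL Ua Bd[symmetric] by simp
  then have trPv: "2 * B * trP = (n - 1) * Bd" by (simp add: algebra_simps)
  have n1: "n + 1 \<noteq> 0" unfolding n_def by simp
  have bf: "\<And>j. b j = - Bd * L j + 2 * B * a j"
  proof -
    fix j
    have e: "(2 * Bd + 2 * B * trP) * L j = (n + 1) * Bd * L j"
      unfolding trPv by (simp add: algebra_simps)
    have "(n + 1) * (b j - 2 * B * a j) + (n + 1) * Bd * L j = 0"
      using X[of j] unfolding e .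
    then have "(n + 1) * (b j - 2 * B * a j + Bd * L j) = 0" by (simp add: algebra_simps)
    then have "b j - 2 * B * a j + Bd * L j = 0" using n1 by simp
    then show "b j = - Bd * L j + 2 * B * a j" by linarith
  qed
  show ?thesis
  proof (intro conjI allI)
    show "\<And>i. eta i = al i + Bd * L i" using etaf bf by simp
    show "trP = (real CARD('n) - 1) * Bd / (2 * B)" using trPv Bnz unfolding n_def
      by (simp add: field_simps)
    show "\<And>j. b j = - Bd * L j + 2 * B * a j" by (rule bf)
  qed
qed



lemma cyc_id:
  fixes G P sig :: "'n::finite \<Rightarrow> 'n \<Rightarrow> real" and KT :: "'n \<Rightarrow> 'n \<Rightarrow> 'n \<Rightarrow> real" and L al b eta a :: "'n \<Rightarrow> real" and B Bd H :: real and i j l :: 'n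
  assumes BdH: "Bd = 2 * B * H"
  and etaf: "\<And>i. eta i = al i + Bd * L i"
  and bf: "\<And>j. b j = - Bd * L j + 2 * B * a j"
  and KT: "\<And>i j l. KT i j l = al i * G j l + b i * L j * L l + B * (P i j * L l + L j * P i l)"
  and sig: "\<And>i j. sig i j = (P i j + P j i) / 2 + (L i * a j + L j * a i) / 2 - H * (G i j + L i * L j)"
  shows "KT i j l + KT j l i + KT l i j - (eta i * G j l + eta j * G l i + eta l * G i j)
     = 2 * B * (sig i j * L l + sig j l * L i + sig l i * L j)"
  unfolding KT sig etaf bf BdH by (simp add: field_simps)

lemma alg_shear:
  fixes G P sig :: "'n::finite \<Rightarrow> 'n \<Rightarrow> real" and KT :: "'n \<Rightarrow> 'n \<Rightarrow> 'n \<Rightarrow> real" and U L al b eta a :: "'n \<Rightarrow> real" and B Bd H :: real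
  assumes Gs: "\<And>i j. G i j = G j i"
  and Ldef: "\<And>j. L j = (\<Sum>k\<in>UNIV. G j k * U k)"
  and unit: "(\<Sum>j\<in>UNIV. L j * U j) = -1"
  and PU: "\<And>i. (\<Sum>j\<in>UNIV. U j * P i j) = 0"
  and adef: "\<And>j. a j = (\<Sum>k\<in>UNIV. U k * P k j)"
  and BdH: "Bd = 2 * B * H"
  and etaf: "\<And>i. eta i = al i + Bd * L i"
  and bf: "\<And>j. b j = - Bd * L j + 2 * B * a j"
  and KT: "\<And>i j l. KT i j l = al i * G j l + b i * L j * L l + B * (P i j * L l + L j * P i l)"
  and sig: "\<And>i j. sig i j = (P i j + P j i) / 2 + (L i * a j + L j * a i) / 2 - H * (G i j + L i * L j)"
  and E: "\<And>i j l. KT i j l + KT j l i + KT l i j = eta i * G j l + eta j * G l i + eta l * G i j"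
  and Bnz: "B \<noteq> 0"
  shows "sig i j = 0"
proof -
  have UL: "(\<Sum>j\<in>UNIV. U j * L j) = -1" using unit by (simp add: mult.commute)
  have UG: "\<And>l. (\<Sum>j\<in>UNIV. U j * G l j) = L l" by (simp add: Ldef mult_ac)
  have Ua: "(\<Sum>i\<in>UNIV. U i * a i) = 0"
  proof -
    have "(\<Sum>i\<in>UNIV. U i * a i) = (\<Sum>i\<in>UNIV. \<Sum>k\<in>UNIV. U i * (U k * P k i))"
      by (simp add: adef sum_distrib_left)
    also have "\<dots> = (\<Sum>k\<in>UNIV. \<Sum>i\<in>UNIV. U i * (U k * P k i))" by (rule sum.swap)
    also have "\<dots> = (\<Sum>k\<in>UNIV. U k * (\<Sum>i\<in>UNIV. U i * P k i))" by (simp add: sum_distrib_left mult_ac)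
    also have "\<dots> = 0" by (simp add: PU)
    finally show ?thesis .
  qed
  have UPa: "\<And>i. (\<Sum>l\<in>UNIV. U l * P l i) = a i" by (simp add: adef)
  have cyc0: "\<And>i j l. sig i j * L l + sig j l * L i + sig l i * L j = 0"
  proof -
    fix i j l
    have "KT i j l + KT j l i + KT l i j - (eta i * G j l + eta j * G l i + eta l * G i j)
     = 2 * B * (sig i j * L l + sig j l * L i + sig l i * L j)"
      unfolding KT sig etaf bf BdH by (simp add: field_simps)
    then have "2 * B * (sig i j * L l + sig j l * L i + sig l i * L j) = 0"
      using E[of i j l] by simp
    then show "sig i j * L l + sig j l * L i + sig l i * L j = 0" using Bnz by simp
  qed
  have sU: "\<And>j. (\<Sum>l\<in>UNIV. U l * sig j l) = 0"
  proof -
    fix j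
    have "(\<Sum>l\<in>UNIV. U l * sig j l) = ((\<Sum>l\<in>UNIV. U l * P j l) + (\<Sum>l\<in>UNIV. U l * P l j)
       + L j * (\<Sum>l\<in>UNIV. U l * a l) + a j * (\<Sum>l\<in>UNIV. U l * L l)) / 2
       - H * (\<Sum>l\<in>UNIV. U l * G j l) - H * L j * (\<Sum>l\<in>UNIV. U l * L l)"
      by (simp add: sig algebra_simps sum.distrib sum_subtractf sum_distrib_left sum_divide_distrib add_divide_distrib diff_divide_distrib)
    then show "(\<Sum>l\<in>UNIV. U l * sig j l) = 0" by (simp add: PU UPa Ua UL UG)
  qed
  have sU2: "\<And>i. (\<Sum>l\<in>UNIV. U l * sig l i) = 0"
  proof -
    fix i
    have "\<And>l. sig l i = sig i l" by (simp add: sig Gs algebra_simps)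
    then show "(\<Sum>l\<in>UNIV. U l * sig l i) = 0" using sU[of i] by simp
  qed
  have "(\<Sum>l\<in>UNIV. U l * (sig i j * L l + sig j l * L i + sig l i * L j)) = 0"
    by (simp only: cyc0 mult_zero_right sum.neutral_const)
  moreover have "(\<Sum>l\<in>UNIV. U l * (sig i j * L l + sig j l * L i + sig l i * L j))
     = sig i j * (\<Sum>l\<in>UNIV. U l * L l) + L i * (\<Sum>l\<in>UNIV. U l * sig j l) + L j * (\<Sum>l\<in>UNIV. U l * sig l i)"
    by (simp add: algebra_simps sum.distrib sum_distrib_left)
  ultimately show ?thesis using UL sU sU2 by simp
qed


context
  fixes U :: "(real^'n::finite) set" and g :: "real^'n \<Rightarrow> real^'n^'n" and u :: "real^'n \<Rightarrow> real^'n"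
    and A B :: "real^'n \<Rightarrow> real" and x :: "real^'n"
  assumes U_open: "open U"
    and lor: "lorentzian_on U g"
    and g_smooth: "\<And>i j. smooth_on U (\<lambda>x. g x $ i $ j)"
    and u_smooth: "\<And>i. smooth_on U (\<lambda>x. u x $ i)"
    and A_smooth: "smooth_on U A"
    and B_smooth: "smooth_on U B"
    and unit: "\<And>x. x \<in> U \<Longrightarrow> (\<Sum>i\<in>UNIV. \<Sum>j\<in>UNIV. g x $ i $ j * u x $ i * u x $ j) = -1"
    and xU: "x \<in> U"
begin

lemma diff_g: "(\<lambda>y. g y $ i $ j) differentiable (at x)" using smooth_diff[OF g_smooth xU] .
lemma diff_u: "(\<lambda>y. u y $ i) differentiable (at x)" using smooth_diff[OF u_smooth xU] .
lemma diff_A: "A differentiable (at x)" using smooth_diff[OF A_smooth xU] .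
lemma diff_B: "B differentiable (at x)" using smooth_diff[OF B_smooth xU] .
lemma diff_lower: "(\<lambda>y. lower g u y j) differentiable (at x)"
  unfolding lower_def by (simp add: diff_g diff_u)

lemma Gs: "g x $ a $ b = g x $ b $ a" using lor_facts(1)[OF lor xU] .

lemma dgs: "partial k (\<lambda>y. g y $ a $ b) x = partial k (\<lambda>y. g y $ b $ a) x"
  by (rule partial_cong[OF diff_g U_open xU]) (use lor_facts(1)[OF lor] in auto)

lemma c1: "(\<Sum>k\<in>UNIV. christoffel g x k i j * g x $ k $ l)
   = (1/2) * (partial i (\<lambda>y. g y $ l $ j) x + partial j (\<lambda>y. g y $ l $ i) x - partial l (\<lambda>y. g y $ i $ j) x)"
proof -
  define T where "T m = partial i (\<lambda>y. g y $ m $ j) x + partial j (\<lambda>y. g y $ m $ i) x - partial m (\<lambda>y. g y $ i $ j) x" for m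
  have "(\<Sum>k\<in>UNIV. christoffel g x k i j * g x $ k $ l) = (\<Sum>k\<in>UNIV. christoffel g x k i j * g x $ l $ k)"
    by (rule sum.cong[OF refl]) (use Gs[of _ l] in simp)
  also have "\<dots> = (\<Sum>k\<in>UNIV. \<Sum>m\<in>UNIV. (1/2) * (ginv g x $ k $ m * T m) * g x $ l $ k)"
    by (simp add: christoffel_def T_def sum_distrib_left sum_distrib_right mult_ac)
  also have "\<dots> = (\<Sum>m\<in>UNIV. \<Sum>k\<in>UNIV. (1/2) * (ginv g x $ k $ m * T m) * g x $ l $ k)" by (rule sum.swap)
  also have "\<dots> = (\<Sum>m\<in>UNIV. ((1/2) * T m) * (\<Sum>k\<in>UNIV. g x $ l $ k * ginv g x $ k $ m))"
    by (simp add: sum_distrib_left mult_ac)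
  also have "\<dots> = (1/2) * T l" by (simp add: ginv_facts(1)[OF lor xU])
  finally show ?thesis by (simp add: T_def)
qed

lemma dlower: "partial i (\<lambda>y. lower g u y j) x
   = (\<Sum>k\<in>UNIV. partial i (\<lambda>y. g y $ j $ k) x * u x $ k + g x $ j $ k * partial i (\<lambda>y. u y $ k) x)"
proof -
  have "partial i (\<lambda>y. lower g u y j) x = partial i (\<lambda>y. \<Sum>k\<in>UNIV. g y $ j $ k * u y $ k) x"
    by (simp add: lower_def)
  also have "\<dots> = (\<Sum>k\<in>UNIV. partial i (\<lambda>y. g y $ j $ k * u y $ k) x)"
    by (rule partial_sum[of "\<lambda>k y. g y $ j $ k * u y $ k", simplified]) (simp add: diff_g diff_u)
  also have "\<dots> = (\<Sum>k\<in>UNIV. partial i (\<lambda>y. g y $ j $ k) x * u x $ k + g x $ j $ k * partial i (\<lambda>y. u y $ k) x)"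
    by (rule sum.cong[OF refl]) (rule partial_mult[OF diff_g diff_u])
  finally show ?thesis .
qed

lemma unitd: "(\<Sum>a\<in>UNIV. \<Sum>b\<in>UNIV. partial i (\<lambda>y. g y $ a $ b) x * u x $ a * u x $ b
     + g x $ a $ b * partial i (\<lambda>y. u y $ a) x * u x $ b + g x $ a $ b * u x $ a * partial i (\<lambda>y. u y $ b) x) = 0"
proof -
  have "partial i (\<lambda>y. \<Sum>a\<in>UNIV. \<Sum>b\<in>UNIV. g y $ a $ b * u y $ a * u y $ b) x = 0"
    by (rule partial_const[OF U_open xU]) (rule unit)
  moreover have "partial i (\<lambda>y. \<Sum>a\<in>UNIV. \<Sum>b\<in>UNIV. g y $ a $ b * u y $ a * u y $ b) x
     = (\<Sum>a\<in>UNIV. partial i (\<lambda>y. \<Sum>b\<in>UNIV. g y $ a $ b * u y $ a * u y $ b) x)"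
    by (rule partial_sum[of "\<lambda>a y. \<Sum>b\<in>UNIV. g y $ a $ b * u y $ a * u y $ b", simplified]) (simp add: diff_g diff_u)
  moreover have "\<And>a. partial i (\<lambda>y. \<Sum>b\<in>UNIV. g y $ a $ b * u y $ a * u y $ b) x
     = (\<Sum>b\<in>UNIV. partial i (\<lambda>y. g y $ a $ b * u y $ a * u y $ b) x)"
    by (rule partial_sum[of "\<lambda>b y. g y $ _ $ b * u y $ _ * u y $ b", simplified]) (simp add: diff_g diff_u)
  moreover have "\<And>a b. partial i (\<lambda>y. g y $ a $ b * u y $ a * u y $ b) x
     = partial i (\<lambda>y. g y $ a $ b) x * u x $ a * u x $ b
     + g x $ a $ b * partial i (\<lambda>y. u y $ a) x * u x $ b + g x $ a $ b * u x $ a * partial i (\<lambda>y. u y $ b) x"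
  proof -
    fix a b
    have d1: "(\<lambda>y. g y $ a $ b * u y $ a) differentiable (at x)" by (simp add: diff_g diff_u)
    show "partial i (\<lambda>y. g y $ a $ b * u y $ a * u y $ b) x
     = partial i (\<lambda>y. g y $ a $ b) x * u x $ a * u x $ b
     + g x $ a $ b * partial i (\<lambda>y. u y $ a) x * u x $ b + g x $ a $ b * u x $ a * partial i (\<lambda>y. u y $ b) x"
      unfolding partial_mult[OF d1 diff_u[of b]] partial_mult[OF diff_g diff_u[of a]]
      by (simp add: algebra_simps)
  qed
  ultimately show ?thesis by simp
qed


lemma GamL: "(\<Sum>k\<in>UNIV. christoffel g x k i j * lower g u x k) = (\<Sum>m\<in>UNIV. u x $ m * ((1/2) * (partial i (\<lambda>y. g y $ m $ j) x + partial j (\<lambda>y. g y $ m $ i) x - partial m (\<lambda>y. g y $ i $ j) x)))"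
proof -
  have "(\<Sum>k\<in>UNIV. christoffel g x k i j * lower g u x k) = (\<Sum>k\<in>UNIV. (\<Sum>m\<in>UNIV. christoffel g x k i j * (g x $ k $ m * u x $ m)))"
    by (simp add: lower_def sum_distrib_left)
  also have "\<dots> = (\<Sum>m\<in>UNIV. (\<Sum>k\<in>UNIV. christoffel g x k i j * (g x $ k $ m * u x $ m)))" by (rule sum.swap)
  also have "\<dots> = (\<Sum>m\<in>UNIV. u x $ m * (\<Sum>k\<in>UNIV. christoffel g x k i j * g x $ k $ m))"
    by (simp add: sum_distrib_left mult_ac)
  also have "\<dots> = (\<Sum>m\<in>UNIV. u x $ m * ((1/2) * (partial i (\<lambda>y. g y $ m $ j) x + partial j (\<lambda>y. g y $ m $ i) x - partial m (\<lambda>y. g y $ i $ j) x)))" by (simp only: c1)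
  finally show ?thesis .
qed

lemma Pform: "cov_d1 g (lower g u) x i j = (\<Sum>k\<in>UNIV. partial i (\<lambda>y. g y $ j $ k) x * u x $ k + g x $ j $ k * partial i (\<lambda>y. u y $ k) x) - (\<Sum>m\<in>UNIV. u x $ m * ((1/2) * (partial i (\<lambda>y. g y $ m $ j) x + partial j (\<lambda>y. g y $ m $ i) x - partial m (\<lambda>y. g y $ i $ j) x)))"
  unfolding cov_d1_def GamL dlower ..

lemma sum_swap_ren: "(\<Sum>j\<in>UNIV. \<Sum>m\<in>UNIV. (f::'n\<Rightarrow>'n\<Rightarrow>real) j m) = (\<Sum>j\<in>UNIV. \<Sum>m\<in>UNIV. f m j)"
  by (rule sum.swap)

lemma PU: "(\<Sum>j\<in>UNIV. u x $ j * cov_d1 g (lower g u) x i j) = 0"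
proof -
  define F where "F j m = u x $ j * (partial i (\<lambda>y. g y $ j $ m) x * u x $ m + g x $ j $ m * partial i (\<lambda>y. u y $ m) x) - u x $ j * (u x $ m * ((1/2) * (partial i (\<lambda>y. g y $ m $ j) x + partial j (\<lambda>y. g y $ m $ i) x - partial m (\<lambda>y. g y $ i $ j) x)))" for j m
  define H where "H j m = partial i (\<lambda>y. g y $ j $ m) x * u x $ j * u x $ m + g x $ j $ m * partial i (\<lambda>y. u y $ j) x * u x $ m + g x $ j $ m * u x $ j * partial i (\<lambda>y. u y $ m) x" for j m
  have S: "(\<Sum>j\<in>UNIV. u x $ j * cov_d1 g (lower g u) x i j) = (\<Sum>j\<in>UNIV. (\<Sum>m\<in>UNIV. F j m))"
    unfolding Pform F_def by (simp add: sum_distrib_left sum_subtractf right_diff_distrib)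
  have H0: "(\<Sum>j\<in>UNIV. (\<Sum>m\<in>UNIV. H j m)) = 0" unfolding H_def by (rule unitd)
  have pt: "\<And>j m. F j m + F m j = (H j m + H m j) / 2"
  proof -
    fix j m
    show "F j m + F m j = (H j m + H m j) / 2"
      unfolding F_def H_def using dgs[of j m i] dgs[of m j i] Gs[of m j] by (simp add: algebra_simps)
  qed
  have "(\<Sum>j\<in>UNIV. (\<Sum>m\<in>UNIV. F j m)) + (\<Sum>j\<in>UNIV. (\<Sum>m\<in>UNIV. F j m)) = (\<Sum>j\<in>UNIV. (\<Sum>m\<in>UNIV. F j m)) + (\<Sum>j\<in>UNIV. (\<Sum>m\<in>UNIV. F m j))"
    by (simp only: sum_swap_ren[of F])
  also have "\<dots> = (\<Sum>j\<in>UNIV. (\<Sum>m\<in>UNIV. (H j m + H m j) / 2))"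
    by (simp add: sum.distrib[symmetric] pt)
  also have "\<dots> = ((\<Sum>j\<in>UNIV. (\<Sum>m\<in>UNIV. H j m)) + (\<Sum>j\<in>UNIV. (\<Sum>m\<in>UNIV. H m j))) / 2"
    by (simp add: sum.distrib sum_divide_distrib add_divide_distrib)
  also have "\<dots> = 0" by (simp only: sum_swap_ren[of "\<lambda>m j. H j m"] H0) simp
  finally show ?thesis unfolding S by simp
qed


lemma swap12: "(\<Sum>a\<in>UNIV. \<Sum>b\<in>UNIV. \<Sum>c\<in>UNIV. (f::'n\<Rightarrow>'n\<Rightarrow>'n\<Rightarrow>real) a b c) = (\<Sum>a\<in>UNIV. \<Sum>b\<in>UNIV. \<Sum>c\<in>UNIV. f b a c)"
  by (rule sum.swap)
lemma swap23: "(\<Sum>a\<in>UNIV. \<Sum>b\<in>UNIV. \<Sum>c\<in>UNIV. (f::'n\<Rightarrow>'n\<Rightarrow>'n\<Rightarrow>real) a b c) = (\<Sum>a\<in>UNIV. \<Sum>b\<in>UNIV. \<Sum>c\<in>UNIV. f a c b)"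
  by (rule sum.cong[OF refl]) (rule sum.swap)
lemma swap13: "(\<Sum>a\<in>UNIV. \<Sum>b\<in>UNIV. \<Sum>c\<in>UNIV. (f::'n\<Rightarrow>'n\<Rightarrow>'n\<Rightarrow>real) a b c) = (\<Sum>a\<in>UNIV. \<Sum>b\<in>UNIV. \<Sum>c\<in>UNIV. f c b a)"
proof -
  have "(\<Sum>a\<in>UNIV. \<Sum>b\<in>UNIV. \<Sum>c\<in>UNIV. f a b c) = (\<Sum>a\<in>UNIV. \<Sum>b\<in>UNIV. \<Sum>c\<in>UNIV. f b a c)" by (rule swap12)
  also have "\<dots> = (\<Sum>a\<in>UNIV. \<Sum>b\<in>UNIV. \<Sum>c\<in>UNIV. f c a b)" by (rule swap23)
  also have "\<dots> = (\<Sum>a\<in>UNIV. \<Sum>b\<in>UNIV. \<Sum>c\<in>UNIV. f c b a)" by (rule swap12)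
  finally show ?thesis .
qed

lemma Gis: "ginv g x $ a $ b = ginv g x $ b $ a" using ginv_facts(3)[OF lor xU] .

lemma trace: "(\<Sum>r\<in>UNIV. partial r (\<lambda>y. u y $ r) x) + (\<Sum>r\<in>UNIV. (\<Sum>k\<in>UNIV. christoffel g x r r k * u x $ k))
   = (\<Sum>i\<in>UNIV. (\<Sum>j\<in>UNIV. ginv g x $ i $ j * cov_d1 g (lower g u) x i j))"
proof -
  define B1 where "B1 = (\<Sum>i\<in>UNIV. (\<Sum>j\<in>UNIV. (\<Sum>k\<in>UNIV. ginv g x $ i $ j * (partial i (\<lambda>y. g y $ j $ k) x * u x $ k))))"
  define B5 where "B5 = (\<Sum>i\<in>UNIV. (\<Sum>j\<in>UNIV. (\<Sum>k\<in>UNIV. ginv g x $ i $ j * (u x $ k * partial k (\<lambda>y. g y $ i $ j) x))))"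
  have R: "(\<Sum>i\<in>UNIV. (\<Sum>j\<in>UNIV. ginv g x $ i $ j * cov_d1 g (lower g u) x i j))
     = B1 + (\<Sum>i\<in>UNIV. (\<Sum>j\<in>UNIV. (\<Sum>k\<in>UNIV. ginv g x $ i $ j * (g x $ j $ k * partial i (\<lambda>y. u y $ k) x))))
       - (1/2) * ((\<Sum>i\<in>UNIV. (\<Sum>j\<in>UNIV. (\<Sum>k\<in>UNIV. ginv g x $ i $ j * (u x $ k * partial i (\<lambda>y. g y $ k $ j) x)))) + (\<Sum>i\<in>UNIV. (\<Sum>j\<in>UNIV. (\<Sum>k\<in>UNIV. ginv g x $ i $ j * (u x $ k * partial j (\<lambda>y. g y $ k $ i) x)))) - B5)"
    unfolding Pform B1_def B5_def
    by (simp add: sum_distrib_left sum.distrib sum_subtractf right_diff_distrib distrib_left algebra_simps)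
  have X2: "(\<Sum>i\<in>UNIV. (\<Sum>j\<in>UNIV. (\<Sum>k\<in>UNIV. ginv g x $ i $ j * (g x $ j $ k * partial i (\<lambda>y. u y $ k) x)))) = (\<Sum>r\<in>UNIV. partial r (\<lambda>y. u y $ r) x)"
  proof -
    have "(\<Sum>i\<in>UNIV. (\<Sum>j\<in>UNIV. (\<Sum>k\<in>UNIV. ginv g x $ i $ j * (g x $ j $ k * partial i (\<lambda>y. u y $ k) x)))) = (\<Sum>i\<in>UNIV. (\<Sum>j\<in>UNIV. (\<Sum>k\<in>UNIV. ginv g x $ i $ k * (g x $ k $ j * partial i (\<lambda>y. u y $ j) x))))"
      by (rule swap23)
    also have "\<dots> = (\<Sum>i\<in>UNIV. (\<Sum>j\<in>UNIV. (\<Sum>k\<in>UNIV. ginv g x $ i $ k * g x $ k $ j) * partial i (\<lambda>y. u y $ j) x))"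
      by (simp add: sum_distrib_left sum_distrib_right mult_ac)
    also have "\<dots> = (\<Sum>r\<in>UNIV. partial r (\<lambda>y. u y $ r) x)" by (simp add: ginv_facts(2)[OF lor xU])
    finally show ?thesis .
  qed
  have Y1: "(\<Sum>i\<in>UNIV. (\<Sum>j\<in>UNIV. (\<Sum>k\<in>UNIV. ginv g x $ i $ j * (u x $ k * partial i (\<lambda>y. g y $ k $ j) x)))) = B1"
    unfolding B1_def by (rule sum.cong[OF refl])+ (subst dgs, simp add: mult_ac)
  have Y2: "(\<Sum>i\<in>UNIV. (\<Sum>j\<in>UNIV. (\<Sum>k\<in>UNIV. ginv g x $ i $ j * (u x $ k * partial j (\<lambda>y. g y $ k $ i) x)))) = B1"
  proof -
    have "(\<Sum>i\<in>UNIV. (\<Sum>j\<in>UNIV. (\<Sum>k\<in>UNIV. ginv g x $ i $ j * (u x $ k * partial j (\<lambda>y. g y $ k $ i) x)))) = (\<Sum>i\<in>UNIV. (\<Sum>j\<in>UNIV. (\<Sum>k\<in>UNIV. ginv g x $ j $ i * (u x $ k * partial i (\<lambda>y. g y $ k $ j) x))))"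
      by (rule swap12)
    also have "\<dots> = B1" unfolding B1_def by (rule sum.cong[OF refl])+ (subst Gis, subst dgs, simp add: mult_ac)
    finally show ?thesis .
  qed
  have LHS: "(\<Sum>r\<in>UNIV. (\<Sum>k\<in>UNIV. christoffel g x r r k * u x $ k)) = (1/2) * ((\<Sum>i\<in>UNIV. (\<Sum>j\<in>UNIV. (\<Sum>k\<in>UNIV. ginv g x $ i $ k * (partial i (\<lambda>y. g y $ k $ j) x * u x $ j))))
      + (\<Sum>i\<in>UNIV. (\<Sum>j\<in>UNIV. (\<Sum>k\<in>UNIV. ginv g x $ i $ k * (partial j (\<lambda>y. g y $ k $ i) x * u x $ j)))) - (\<Sum>i\<in>UNIV. (\<Sum>j\<in>UNIV. (\<Sum>k\<in>UNIV. ginv g x $ i $ k * (partial k (\<lambda>y. g y $ i $ j) x * u x $ j)))))"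
    by (simp add: christoffel_def sum_distrib_left sum_distrib_right sum.distrib sum_subtractf algebra_simps)
  have Z1: "(\<Sum>i\<in>UNIV. (\<Sum>j\<in>UNIV. (\<Sum>k\<in>UNIV. ginv g x $ i $ k * (partial i (\<lambda>y. g y $ k $ j) x * u x $ j)))) = B1" unfolding B1_def by (rule swap23)
  have Z3: "(\<Sum>i\<in>UNIV. (\<Sum>j\<in>UNIV. (\<Sum>k\<in>UNIV. ginv g x $ i $ k * (partial k (\<lambda>y. g y $ i $ j) x * u x $ j)))) = B1"
  proof -
    have "(\<Sum>i\<in>UNIV. (\<Sum>j\<in>UNIV. (\<Sum>k\<in>UNIV. ginv g x $ i $ k * (partial k (\<lambda>y. g y $ i $ j) x * u x $ j)))) = (\<Sum>i\<in>UNIV. (\<Sum>j\<in>UNIV. (\<Sum>k\<in>UNIV. ginv g x $ k $ i * (partial i (\<lambda>y. g y $ k $ j) x * u x $ j))))"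
      by (rule swap13)
    also have "\<dots> = (\<Sum>i\<in>UNIV. (\<Sum>j\<in>UNIV. (\<Sum>k\<in>UNIV. ginv g x $ i $ k * (partial i (\<lambda>y. g y $ k $ j) x * u x $ j))))"
      by (rule sum.cong[OF refl])+ (subst Gis, rule refl)
    finally show ?thesis using Z1 by simp
  qed
  have Z2: "(\<Sum>i\<in>UNIV. (\<Sum>j\<in>UNIV. (\<Sum>k\<in>UNIV. ginv g x $ i $ k * (partial j (\<lambda>y. g y $ k $ i) x * u x $ j)))) = B5"
  proof -
    have "(\<Sum>i\<in>UNIV. (\<Sum>j\<in>UNIV. (\<Sum>k\<in>UNIV. ginv g x $ i $ k * (partial j (\<lambda>y. g y $ k $ i) x * u x $ j)))) = (\<Sum>i\<in>UNIV. (\<Sum>j\<in>UNIV. (\<Sum>k\<in>UNIV. ginv g x $ i $ j * (partial k (\<lambda>y. g y $ j $ i) x * u x $ k))))"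
      by (rule swap23)
    also have "\<dots> = B5" unfolding B5_def by (rule sum.cong[OF refl])+ (subst dgs, simp add: mult_ac)
    finally show ?thesis .
  qed
  show ?thesis unfolding R X2 Y1 Y2 LHS Z1 Z2 Z3 by (simp add: algebra_simps)
qed

lemma unit': "(\<Sum>j\<in>UNIV. lower g u x j * u x $ j) = -1"
proof -
  have "(\<Sum>j\<in>UNIV. lower g u x j * u x $ j) = (\<Sum>i\<in>UNIV. (\<Sum>j\<in>UNIV. g x $ i $ j * u x $ i * u x $ j))"
    by (simp add: lower_def sum_distrib_left sum_distrib_right mult_ac)
  then show ?thesis using unit[OF xU] by simp
qed


lemma KTf: "cov_d2 g (perfect_fluid g u A B) x i j l = partial i A x * g x $ j $ l + partial i B x * lower g u x j * lower g u x l
    + B x * (cov_d1 g (lower g u) x i j * lower g u x l + lower g u x j * cov_d1 g (lower g u) x i l)"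
proof -
  have dBL: "(\<lambda>y. B y * lower g u y j) differentiable (at x)" by (simp add: diff_B diff_lower)
  have "partial i (\<lambda>y. perfect_fluid g u A B y j l) x
      = partial i (\<lambda>y. A y * g y $ j $ l + B y * lower g u y j * lower g u y l) x"
    by (simp only: perfect_fluid_def)
  also have "\<dots> = partial i (\<lambda>y. A y * g y $ j $ l) x + partial i (\<lambda>y. B y * lower g u y j * lower g u y l) x"
    by (rule partial_add) (simp_all add: diff_A diff_g diff_B diff_lower)
  also have "\<dots> = partial i A x * g x $ j $ l + A x * partial i (\<lambda>y. g y $ j $ l) x
      + ((partial i B x * lower g u x j + B x * partial i (\<lambda>y. lower g u y j) x) * lower g u x l + B x * lower g u x j * partial i (\<lambda>y. lower g u y l) x)"
    unfolding partial_mult[OF diff_A diff_g] partial_mult[OF dBL diff_lower] partial_mult[OF diff_B diff_lower] ..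
  finally have pK: "partial i (\<lambda>y. perfect_fluid g u A B y j l) x = partial i A x * g x $ j $ l + A x * partial i (\<lambda>y. g y $ j $ l) x
      + ((partial i B x * lower g u x j + B x * partial i (\<lambda>y. lower g u y j) x) * lower g u x l + B x * lower g u x j * partial i (\<lambda>y. lower g u y l) x)" .
  have s1: "(\<Sum>k\<in>UNIV. christoffel g x k i j * perfect_fluid g u A B x k l)
     = A x * ((1/2) * (partial i (\<lambda>y. g y $ l $ j) x + partial j (\<lambda>y. g y $ l $ i) x - partial l (\<lambda>y. g y $ i $ j) x)) + B x * lower g u x l * (\<Sum>k\<in>UNIV. christoffel g x k i j * lower g u x k)"
  proof -
    have "(\<Sum>k\<in>UNIV. christoffel g x k i j * perfect_fluid g u A B x k l)
      = A x * (\<Sum>k\<in>UNIV. christoffel g x k i j * g x $ k $ l) + B x * lower g u x l * (\<Sum>k\<in>UNIV. christoffel g x k i j * lower g u x k)"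
      by (simp add: perfect_fluid_def algebra_simps sum.distrib sum_distrib_left)
    then show ?thesis by (simp only: c1)
  qed
  have s2: "(\<Sum>k\<in>UNIV. christoffel g x k i l * perfect_fluid g u A B x j k)
     = A x * ((1/2) * (partial i (\<lambda>y. g y $ j $ l) x + partial l (\<lambda>y. g y $ j $ i) x - partial j (\<lambda>y. g y $ i $ l) x)) + B x * lower g u x j * (\<Sum>k\<in>UNIV. christoffel g x k i l * lower g u x k)"
  proof -
    have "(\<Sum>k\<in>UNIV. christoffel g x k i l * perfect_fluid g u A B x j k)
      = A x * (\<Sum>k\<in>UNIV. christoffel g x k i l * g x $ j $ k) + B x * lower g u x j * (\<Sum>k\<in>UNIV. christoffel g x k i l * lower g u x k)"
      by (simp add: perfect_fluid_def algebra_simps sum.distrib sum_distrib_left)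
    also have "(\<Sum>k\<in>UNIV. christoffel g x k i l * g x $ j $ k) = (\<Sum>k\<in>UNIV. christoffel g x k i l * g x $ k $ j)"
      by (rule sum.cong[OF refl]) (subst Gs, rule refl)
    finally show ?thesis by (simp only: c1)
  qed
  show ?thesis
    unfolding cov_d2_def pK s1 s2 cov_d1_def using dgs[of i l j] dgs[of j l i] dgs[of l j i]
    by (simp add: algebra_simps)
qed


lemma at_nec:
  assumes E: "\<And>i j l. cov_d2 g (perfect_fluid g u A B) x i j l + cov_d2 g (perfect_fluid g u A B) x j l i
      + cov_d2 g (perfect_fluid g u A B) x l i j = eta i * g x $ j $ l + eta j * g x $ l $ i + eta l * g x $ i $ j"
    and Bnz: "B x \<noteq> 0" and dim: "CARD('n) \<ge> 2"
  shows "(\<forall>i. eta i = partial i A x + dotd u B x * lower g u x i)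
    \<and> expansion g u x = dotd u B x / (2 * B x)
    \<and> (\<forall>j. partial j B x = - dotd u B x * lower g u x j + 2 * B x * accel g u x j)
    \<and> (\<forall>i j. shear g u x i j = 0)"
proof -
  define trP where "trP = (\<Sum>i\<in>UNIV. \<Sum>j\<in>UNIV. ginv g x $ i $ j * cov_d1 g (lower g u) x i j)"
  have R: "(\<forall>i. eta i = partial i A x + dotd u B x * lower g u x i) \<and> trP = (real CARD('n) - 1) * dotd u B x / (2 * B x)
       \<and> (\<forall>j. partial j B x = - dotd u B x * lower g u x j + 2 * B x * accel g u x j)"
    by (rule alg_nec[where G="\<lambda>i j. g x $ i $ j" and Gi="\<lambda>i j. ginv g x $ i $ j" and P="cov_d1 g (lower g u) x"
        and KT="cov_d2 g (perfect_fluid g u A B) x" and U="\<lambda>k. u x $ k" and L="lower g u x"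
        and al="\<lambda>i. partial i A x" and b="\<lambda>i. partial i B x" and eta=eta and a="accel g u x" and B="B x"
        and Bd="dotd u B x" and trP=trP])
      (rule Gs, rule Gis, rule ginv_facts(1)[OF lor xU], rule ginv_facts(2)[OF lor xU], rule lower_def, rule unit',
       rule PU, rule accel_def, rule dotd_def, rule trP_def, rule KTf, rule E, rule Bnz, rule dim)
  have n1: "real CARD('n) - 1 \<noteq> 0" using dim by simp
  have ex: "expansion g u x = (1 / (real CARD('n) - 1)) * trP"
    unfolding expansion_def trP_def trace ..
  have trv: "trP = (real CARD('n) - 1) * dotd u B x / (2 * B x)" using R by blast
  have exv: "expansion g u x = dotd u B x / (2 * B x)" unfolding ex trv using n1 by simp
  have BdH: "dotd u B x = 2 * B x * expansion g u x" using exv Bnz by (simp add: field_simps)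
  have sh: "\<And>i j. shear g u x i j = 0"
    by (rule alg_shear[where G="\<lambda>i j. g x $ i $ j" and P="cov_d1 g (lower g u) x"
        and KT="cov_d2 g (perfect_fluid g u A B) x" and U="\<lambda>k. u x $ k" and L="lower g u x"
        and al="\<lambda>i. partial i A x" and b="\<lambda>i. partial i B x" and eta=eta and a="accel g u x" and B="B x"
        and Bd="dotd u B x" and H="expansion g u x" and sig="shear g u x"])
      (rule Gs, rule lower_def, rule unit', rule PU, rule accel_def, rule BdH, use R in blast, use R in blast,
       rule KTf, rule shear_def, rule E, rule Bnz)
  show ?thesis using R exv sh by blast
qed

lemma at_suf:
  assumes Bnz: "B x \<noteq> 0"
    and sh: "\<And>i j. shear g u x i j = 0"
    and exv: "expansion g u x = dotd u B x / (2 * B x)"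
    and bf: "\<And>j. partial j B x = - dotd u B x * lower g u x j + 2 * B x * accel g u x j"
  shows "cov_d2 g (perfect_fluid g u A B) x i j l + cov_d2 g (perfect_fluid g u A B) x j l i
      + cov_d2 g (perfect_fluid g u A B) x l i j
    = (partial i A x + dotd u B x * lower g u x i) * g x $ j $ l + (partial j A x + dotd u B x * lower g u x j) * g x $ l $ i
      + (partial l A x + dotd u B x * lower g u x l) * g x $ i $ j"
proof -
  have BdH: "dotd u B x = 2 * B x * expansion g u x" using exv Bnz by (simp add: field_simps)
  have "cov_d2 g (perfect_fluid g u A B) x i j l + cov_d2 g (perfect_fluid g u A B) x j l i
      + cov_d2 g (perfect_fluid g u A B) x l i j
    - ((partial i A x + dotd u B x * lower g u x i) * g x $ j $ l + (partial j A x + dotd u B x * lower g u x j) * g x $ l $ i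
      + (partial l A x + dotd u B x * lower g u x l) * g x $ i $ j)
    = 2 * B x * (shear g u x i j * lower g u x l + shear g u x j l * lower g u x i + shear g u x l i * lower g u x j)"
    unfolding KTf shear_def bf BdH by (simp add: field_simps)
  then show ?thesis using sh by simp
qed

end

theorem theorem1:
  fixes U :: "(real^'n::finite) set"
    and g :: "real^'n \<Rightarrow> real^'n^'n"
    and u :: "real^'n \<Rightarrow> real^'n"
    and A B :: "real^'n \<Rightarrow> real"
  assumes dim: "CARD('n) \<ge> 2"
    and U_open: "open U"
    and lor: "lorentzian_on U g"
    and g_smooth: "\<And>i j. smooth_on U (\<lambda>x. g x $ i $ j)"
    and u_smooth: "\<And>i. smooth_on U (\<lambda>x. u x $ i)"
    and A_smooth: "smooth_on U A"
    and B_smooth: "smooth_on U B"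
    and unit: "\<And>x. x \<in> U \<Longrightarrow> (\<Sum>i\<in>UNIV. \<Sum>j\<in>UNIV. g x $ i $ j * u x $ i * u x $ j) = -1"
    and B_nz: "\<And>x. x \<in> U \<Longrightarrow> B x \<noteq> 0"
  shows "(is_CKT U g (perfect_fluid g u A B) \<longleftrightarrow>
            ((\<forall>x\<in>U. \<forall>i j. shear g u x i j = 0)
             \<and> (\<forall>x\<in>U. expansion g u x = dotd u B x / (2 * B x))
             \<and> (\<forall>x\<in>U. \<forall>j. partial j B x = - dotd u B x * lower g u x j + 2 * B x * accel g u x j)))
         \<and> (\<forall>eta. ckt_eq U g (perfect_fluid g u A B) eta \<longrightarrow>
               (\<forall>x\<in>U. \<forall>j. eta x j = partial j A x + dotd u B x * lower g u x j))"
proof -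
  have pw: "\<And>x eta. x \<in> U \<Longrightarrow> (\<And>i j l. cov_d2 g (perfect_fluid g u A B) x i j l + cov_d2 g (perfect_fluid g u A B) x j l i
      + cov_d2 g (perfect_fluid g u A B) x l i j = eta i * g x $ j $ l + eta j * g x $ l $ i + eta l * g x $ i $ j)
    \<Longrightarrow> B x \<noteq> 0 \<Longrightarrow> CARD('n) \<ge> 2 \<Longrightarrow> (\<forall>i. eta i = partial i A x + dotd u B x * lower g u x i)
    \<and> expansion g u x = dotd u B x / (2 * B x)
    \<and> (\<forall>j. partial j B x = - dotd u B x * lower g u x j + 2 * B x * accel g u x j)
    \<and> (\<forall>i j. shear g u x i j = 0)"
    by (rule at_nec[OF U_open lor g_smooth u_smooth A_smooth B_smooth unit]) auto
  have ps: "\<And>x i j l. x \<in> U \<Longrightarrow> B x \<noteq> 0 \<Longrightarrow> (\<And>i j. shear g u x i j = 0)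
    \<Longrightarrow> expansion g u x = dotd u B x / (2 * B x)
    \<Longrightarrow> (\<And>j. partial j B x = - dotd u B x * lower g u x j + 2 * B x * accel g u x j)
    \<Longrightarrow> cov_d2 g (perfect_fluid g u A B) x i j l + cov_d2 g (perfect_fluid g u A B) x j l i
      + cov_d2 g (perfect_fluid g u A B) x l i j
    = (partial i A x + dotd u B x * lower g u x i) * g x $ j $ l + (partial j A x + dotd u B x * lower g u x j) * g x $ l $ i
      + (partial l A x + dotd u B x * lower g u x l) * g x $ i $ j"
    by (rule at_suf[OF U_open lor g_smooth u_smooth A_smooth B_smooth unit]) auto
  have etapart: "\<forall>eta. ckt_eq U g (perfect_fluid g u A B) eta \<longrightarrow>
               (\<forall>x\<in>U. \<forall>j. eta x j = partial j A x + dotd u B x * lower g u x j)"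
  proof (intro allI impI ballI)
    fix eta x j assume c: "ckt_eq U g (perfect_fluid g u A B) eta" and xU: "x \<in> U"
    have "\<And>i j l. cov_d2 g (perfect_fluid g u A B) x i j l + cov_d2 g (perfect_fluid g u A B) x j l i
      + cov_d2 g (perfect_fluid g u A B) x l i j = eta x i * g x $ j $ l + eta x j * g x $ l $ i + eta x l * g x $ i $ j"
      using c xU unfolding ckt_eq_def by blast
    from pw[OF xU this B_nz[OF xU] dim] show "eta x j = partial j A x + dotd u B x * lower g u x j" by blast
  qed
  have fwd: "is_CKT U g (perfect_fluid g u A B) \<Longrightarrow>
            ((\<forall>x\<in>U. \<forall>i j. shear g u x i j = 0)
             \<and> (\<forall>x\<in>U. expansion g u x = dotd u B x / (2 * B x))
             \<and> (\<forall>x\<in>U. \<forall>j. partial j B x = - dotd u B x * lower g u x j + 2 * B x * accel g u x j))"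
  proof -
    assume "is_CKT U g (perfect_fluid g u A B)"
    then obtain eta where c: "ckt_eq U g (perfect_fluid g u A B) eta" unfolding is_CKT_def by blast
    have "\<And>x. x \<in> U \<Longrightarrow> (\<forall>i. eta x i = partial i A x + dotd u B x * lower g u x i)
    \<and> expansion g u x = dotd u B x / (2 * B x)
    \<and> (\<forall>j. partial j B x = - dotd u B x * lower g u x j + 2 * B x * accel g u x j)
    \<and> (\<forall>i j. shear g u x i j = 0)"
    proof -
      fix x assume xU: "x \<in> U"
      have "\<And>i j l. cov_d2 g (perfect_fluid g u A B) x i j l + cov_d2 g (perfect_fluid g u A B) x j l i
        + cov_d2 g (perfect_fluid g u A B) x l i j = eta x i * g x $ j $ l + eta x j * g x $ l $ i + eta x l * g x $ i $ j"
        using c xU unfolding ckt_eq_def by blast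
      from pw[OF xU this B_nz[OF xU] dim] show "(\<forall>i. eta x i = partial i A x + dotd u B x * lower g u x i)
    \<and> expansion g u x = dotd u B x / (2 * B x)
    \<and> (\<forall>j. partial j B x = - dotd u B x * lower g u x j + 2 * B x * accel g u x j)
    \<and> (\<forall>i j. shear g u x i j = 0)" .
    qed
    then show ?thesis by blast
  qed
  have bwd: "((\<forall>x\<in>U. \<forall>i j. shear g u x i j = 0)
             \<and> (\<forall>x\<in>U. expansion g u x = dotd u B x / (2 * B x))
             \<and> (\<forall>x\<in>U. \<forall>j. partial j B x = - dotd u B x * lower g u x j + 2 * B x * accel g u x j))
      \<Longrightarrow> is_CKT U g (perfect_fluid g u A B)"
  proof -
    assume h: "((\<forall>x\<in>U. \<forall>i j. shear g u x i j = 0)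
             \<and> (\<forall>x\<in>U. expansion g u x = dotd u B x / (2 * B x))
             \<and> (\<forall>x\<in>U. \<forall>j. partial j B x = - dotd u B x * lower g u x j + 2 * B x * accel g u x j))"
    have "ckt_eq U g (perfect_fluid g u A B) (\<lambda>x i. partial i A x + dotd u B x * lower g u x i)"
      unfolding ckt_eq_def
    proof (intro ballI allI)
      fix x i j l assume xU: "x \<in> U"
      show "cov_d2 g (perfect_fluid g u A B) x i j l + cov_d2 g (perfect_fluid g u A B) x j l i
      + cov_d2 g (perfect_fluid g u A B) x l i j
    = (partial i A x + dotd u B x * lower g u x i) * g x $ j $ l + (partial j A x + dotd u B x * lower g u x j) * g x $ l $ i
      + (partial l A x + dotd u B x * lower g u x l) * g x $ i $ j"
        by (rule ps[OF xU B_nz[OF xU]]) (use h xU in auto)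
    qed
    then show ?thesis unfolding is_CKT_def by blast
  qed
  show ?thesis using fwd bwd etapart by blast
qed

end
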